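(* Let $G$ be an antiferromagnetic weighted graph on vertex set $[n]$, let $t$ be a positive integer, and let $\mathbf{a},\mathbf{b}\in(\mathbb{R}_{\ge0})^n$. Then \[ V_{K_t}(\mathbf{b},\mathbf{a},\dots,\mathbf{a};G)\cdot V_{K_t}(\mathbf{a},\mathbf{b},\dots,\mathbf{b};G)\ \ge\ V_{K_t}(\mathbf{a},\dots,\mathbf{a};G)\cdot V_{K_t}(\mathbf{b},\dots,\mathbf{b};G). \]
   Context: A weighted graph $G$ on $[n]$ is a symmetric matrix with nonnegative entries $G(i,j)$ (loops allowed); it is antiferromagnetic if it has at most one positive eigenvalue, counted with multiplicity. For a graph $H$ with $V(H)=[t]$ and vectors $\mathbf{x}_1,\dots,\mathbf{x}_t\in\mathbb{R}^n$, $\mathbf{x}_u=(x_{u,1},\dots,x_{u,n})$, the $G$-volume is \[V_H(\mathbf{x}_1,\dots,\mathbf{x}_t;G)=\sum_{\phi:[t]\to[n]}\prod_{uv\in E(H)}G(\phi(u),\phi(v))\prod_{u\in[t]}x_{u,\phi(u)}.\] Here $H=K_t$, the complete graph on $[t]$; each $V_{K_t}$ has $t$ vector arguments. *)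

theory Defs
  imports "Jordan_Normal_Form.Char_Poly" "HOL-Library.FuncSet"
begin

definition weighted_graph :: "nat \<Rightarrow> real mat \<Rightarrow> bool" where
  "weighted_graph n G \<longleftrightarrow> G \<in> carrier_mat n n \<and> G\<^sup>T = G \<and>
     (\<forall>i<n. \<forall>j<n. G $$ (i,j) \<ge> 0)"

definition num_pos_eigenvalues :: "real mat \<Rightarrow> nat" where
  "num_pos_eigenvalues G =
     (\<Sum>x\<in>{x. eigenvalue G x \<and> x > 0}. order x (char_poly G))"

definition antiferromagnetic :: "nat \<Rightarrow> real mat \<Rightarrow> bool" where
  "antiferromagnetic n G \<longleftrightarrow> weighted_graph n G \<and> num_pos_eigenvalues G \<le> 1"

text \<open>G-volume for the complete graph K_t on vertices {0..<t}; x u is the vector for vertex u,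
  with coordinates x u i for i < n.\<close>
definition volume_Kt :: "nat \<Rightarrow> nat \<Rightarrow> real mat \<Rightarrow> (nat \<Rightarrow> nat \<Rightarrow> real) \<Rightarrow> real" where
  "volume_Kt t n G x =
     (\<Sum>\<phi>\<in>{0..<t} \<rightarrow>\<^sub>E {0..<n}.
        (\<Prod>(u,v)\<in>{(u,v). u < v \<and> v < t}. G $$ (\<phi> u, \<phi> v)) *
        (\<Prod>u<t. x u (\<phi> u)))"

end

theory Submission
  imports Defs
begin

lemma real_sym_has_real_eigenvalue:
  fixes A :: "real mat"
  assumes A: "A \<in> carrier_mat n n" and sym: "A\<^sup>T = A" and n: "n > 0"
  shows "\<exists>r. eigenvalue A r"
proof -
  let ?Ac = "map_mat complex_of_real A"
  have Ac: "?Ac \<in> carrier_mat n n" using A by auto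
  from char_poly_factorized[OF Ac] obtain as where
    cp: "char_poly ?Ac = (\<Prod>a\<leftarrow>as. [:- a, 1:])" and len: "length as = n" by blast
  from len n obtain a where a: "a \<in> set as" by (cases as) auto
  have "poly (char_poly ?Ac) a = 0" unfolding cp using a
    by (simp add: poly_prod_list prod_list_zero_iff)
  hence "eigenvalue ?Ac a" using eigenvalue_root_char_poly[OF Ac] by simp
  then obtain v where v: "v \<in> carrier_vec n" "v \<noteq> 0\<^sub>v n" "?Ac *\<^sub>v v = a \<cdot>\<^sub>v v"
    unfolding eigenvalue_def eigenvector_def using Ac by auto
  define S where "S = (\<Sum>i<n. cnj (v $ i) * (?Ac *\<^sub>v v) $ i)"
  have S1: "S = a * (\<Sum>i<n. cnj (v $ i) * v $ i)"
    unfolding S_def v(3) using v(1) by (simp add: sum_distrib_left algebra_simps)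
  have S2: "S = (\<Sum>i<n. \<Sum>j<n. cnj (v $ i) * of_real (A $$ (i,j)) * v $ j)"
    unfolding S_def using v(1) A
    by (simp add: mult_mat_vec_def scalar_prod_def sum_distrib_left atLeast0LessThan algebra_simps)
  have "cnj S = (\<Sum>i<n. \<Sum>j<n. v $ i * of_real (A $$ (i,j)) * cnj (v $ j))"
    unfolding S2 by (simp add: cnj_sum)
  also have "\<dots> = (\<Sum>j<n. \<Sum>i<n. v $ i * of_real (A $$ (i,j)) * cnj (v $ j))"
    by (rule sum.swap)
  also have "\<dots> = S" unfolding S2
  proof (intro sum.cong refl)
    fix i j assume i: "i \<in> {..<n}" and j: "j \<in> {..<n}"
    have "A $$ (j, i) = A $$ (i, j)"
      using arg_cong[OF sym, of "\<lambda>M. M $$ (i,j)"] i j A by auto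
    thus "v $ j * of_real (A $$ (j, i)) * cnj (v $ i) = cnj (v $ i) * of_real (A $$ (i, j)) * v $ j"
      by simp
  qed
  finally have Sreal: "cnj S = S" .
  define N where "N = (\<Sum>i<n. cnj (v $ i) * v $ i)"
  have Nreal: "N = of_real (\<Sum>i<n. (cmod (v $ i))\<^sup>2)"
    unfolding N_def of_real_sum by (intro sum.cong refl) (metis complex_norm_square mult.commute of_real_power)
  have "\<exists>i<n. v $ i \<noteq> 0" using v(1,2) by (metis carrier_vecD eq_vecI index_zero_vec(1) index_zero_vec(2))
  then obtain i0 where i0: "i0 < n" "v $ i0 \<noteq> 0" by blast
  have "(\<Sum>i<n. (cmod (v $ i))\<^sup>2) > 0"
    by (rule sum_pos2[of _ i0]) (use i0 in auto)
  hence N0: "N \<noteq> 0" unfolding Nreal by (metis of_real_eq_0_iff less_irrefl)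
  have "cnj N = N" unfolding Nreal by simp
  have "a * N = S" using S1 N_def by simp
  hence "cnj a * N = a * N" using Sreal \<open>cnj N = N\<close>
    by (metis complex_cnj_mult)
  hence "cnj a = a" using N0 by simp
  hence aR: "a = of_real (Re a)" using Reals_cnj_iff complex_is_Real_iff by (metis Reals_cases of_real_Re)
  have "poly (char_poly ?Ac) (of_real (Re a)) = 0" using \<open>poly (char_poly ?Ac) a = 0\<close> aR by simp
  hence "poly (map_poly complex_of_real (char_poly A)) (of_real (Re a)) = 0"
    using of_real_hom.char_poly_hom[OF A] by metis
  hence "complex_of_real (poly (char_poly A) (Re a)) = 0"
    by (metis of_real_hom.poly_map_poly)
  hence "poly (char_poly A) (Re a) = 0" by simp
  thus ?thesis using eigenvalue_root_char_poly[OF A] by blast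
qed

definition symm :: "nat \<Rightarrow> (nat \<Rightarrow> nat \<Rightarrow> real) \<Rightarrow> bool" where
  "symm n A \<longleftrightarrow> (\<forall>i<n. \<forall>j<n. A i j = A j i)"
definition orthonormal :: "nat \<Rightarrow> (nat \<Rightarrow> nat \<Rightarrow> real) \<Rightarrow> bool" where
  "orthonormal n u \<longleftrightarrow> (\<forall>k<n. \<forall>l<n. (\<Sum>i<n. u k i * u l i) = (if k = l then 1 else 0))"
definition complete :: "nat \<Rightarrow> (nat \<Rightarrow> nat \<Rightarrow> real) \<Rightarrow> bool" where
  "complete n u \<longleftrightarrow> (\<forall>i<n. \<forall>j<n. (\<Sum>k<n. u k i * u k j) = (if i = j then 1 else 0))"
definition mm :: "nat \<Rightarrow> (nat \<Rightarrow> nat \<Rightarrow> real) \<Rightarrow> (nat \<Rightarrow> nat \<Rightarrow> real) \<Rightarrow> nat \<Rightarrow> nat \<Rightarrow> real" where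
  "mm n A B i j = (\<Sum>k<n. A i k * B k j)"

lemma sum_delta_left[simp]: fixes n :: nat assumes that: "i < n" shows " (\<Sum>j<n. (if i = j then 1 else 0) * f j) = (f i :: real)"
proof -
  have "(\<Sum>j<n. (if i = j then 1 else 0) * f j) = (\<Sum>j<n. if i = j then f j else 0)"
    by (intro sum.cong) auto
  also have "\<dots> = f i" using that by (subst sum.delta') auto
  finally show ?thesis .
qed
lemma sum_delta_right[simp]: fixes n :: nat assumes that: "i < n" shows " (\<Sum>j<n. f j * (if j = i then 1 else 0)) = (f i :: real)"
proof -
  have "(\<Sum>j<n. f j * (if j = i then 1 else 0)) = (\<Sum>j<n. if j = i then f j else 0)"
    by (intro sum.cong) auto
  also have "\<dots> = f i" using that by (subst sum.delta) auto
  finally show ?thesis .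
qed

lemma sum_delta_r1: fixes n :: nat assumes "i < n" shows "(\<Sum>j<n. f j * (if i = j then 1 else 0)) = (f i :: real)"
proof -
  have "(\<Sum>j<n. f j * (if i = j then 1 else 0)) = (\<Sum>j<n. if i = j then f j else 0)" by (intro sum.cong) auto
  also have "\<dots> = f i" using assms by (subst sum.delta') auto
  finally show ?thesis .
qed

lemma sum_prod_helper: "(\<Sum>i\<in>I. \<Sum>j\<in>J. c * a i * b j) = c * (\<Sum>i\<in>I. a i) * (\<Sum>j\<in>J. b j :: real)"
proof -
  have "c * (\<Sum>i\<in>I. a i) = (\<Sum>i\<in>I. c * a i)" by (rule sum_distrib_left)
  thus ?thesis by (simp only: sum_product)
qed

lemma swap23: "(\<Sum>a\<in>A. \<Sum>b\<in>B. \<Sum>c\<in>C. F a b c) = (\<Sum>a\<in>A. \<Sum>c\<in>C. \<Sum>b\<in>B. F a b c)"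
  by (rule sum.cong[OF refl], rule sum.swap)
lemma swap12: "(\<Sum>a\<in>A. \<Sum>b\<in>B. \<Sum>c\<in>C. F a b c) = (\<Sum>b\<in>B. \<Sum>a\<in>A. \<Sum>c\<in>C. F a b c)"
  by (rule sum.swap)
lemma rot3: "(\<Sum>a\<in>A. \<Sum>b\<in>B. \<Sum>c\<in>C. F a b c) = (\<Sum>b\<in>B. \<Sum>c\<in>C. \<Sum>a\<in>A. F a b c)"
  by (subst swap12) (rule swap23)
lemma rot3': "(\<Sum>b\<in>B. \<Sum>c\<in>C. \<Sum>a\<in>A. F a b c) = (\<Sum>a\<in>A. \<Sum>b\<in>B. \<Sum>c\<in>C. F a b c)"
  by (rule rot3[symmetric])

lemma mm_assoc: "mm n (mm n A B) C i j = mm n A (mm n B C) i j"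
  unfolding mm_def by (simp add: sum_distrib_left sum_distrib_right mult.assoc) (rule sum.swap)

lemma real_eigenvector_fun:
  assumes "symm n A" "n > 0"
  shows "\<exists>lam v. (\<Sum>i<n. (v i)\<^sup>2) = 1 \<and> (\<forall>i<n. (\<Sum>j<n. A i j * v j) = lam * v i)"
proof -
  let ?A = "mat n n (\<lambda>(i,j). A i j)"
  have Ac: "?A \<in> carrier_mat n n" by simp
  have "?A\<^sup>T = ?A" using assms(1) unfolding symm_def by (intro eq_matI) auto
  from real_sym_has_real_eigenvalue[OF Ac this assms(2)] obtain r where "eigenvalue ?A r" by blast
  then obtain v where v: "v \<in> carrier_vec n" "v \<noteq> 0\<^sub>v n" "?A *\<^sub>v v = r \<cdot>\<^sub>v v"
    unfolding eigenvalue_def eigenvector_def by auto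
  have ev: "(\<Sum>j<n. A i j * v $ j) = r * v $ i" if "i < n" for i
  proof -
    have "(?A *\<^sub>v v) $ i = r * v $ i" using v(3) that v(1) by simp
    thus ?thesis using that v(1) by (simp add: mult_mat_vec_def scalar_prod_def atLeast0LessThan)
  qed
  have "\<exists>i<n. v $ i \<noteq> 0" using v(1,2) by (metis carrier_vecD eq_vecI index_zero_vec(1) index_zero_vec(2))
  then obtain i0 where i0: "i0 < n" "v $ i0 \<noteq> 0" by blast
  define N where "N = (\<Sum>i<n. (v $ i)\<^sup>2)"
  have N: "N > 0" unfolding N_def by (rule sum_pos2[of _ i0]) (use i0 in auto)
  define w where "w i = v $ i / sqrt N" for i
  have "(\<Sum>i<n. (w i)\<^sup>2) = (\<Sum>i<n. (v $ i)\<^sup>2 / N)"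
    unfolding w_def using N by (simp add: power_divide)
  also have "\<dots> = 1" using N by (simp add: sum_divide_distrib[symmetric] N_def)
  finally have "(\<Sum>i<n. (w i)\<^sup>2) = 1" .
  moreover have "\<forall>i<n. (\<Sum>j<n. A i j * w j) = r * w i"
    using ev unfolding w_def by (simp add: sum_divide_distrib[symmetric] mult.assoc times_divide_eq_right)
  ultimately show ?thesis by blast
qed

lemma householder:
  fixes v :: "nat \<Rightarrow> real"
  assumes unit: "(\<Sum>i<Suc n. (v i)\<^sup>2) = 1"
  shows "\<exists>Q. symm (Suc n) Q \<and> (\<forall>i<Suc n. \<forall>j<Suc n. mm (Suc n) Q Q i j = (if i = j then 1 else 0))
             \<and> (\<forall>i<Suc n. Q i n = v i)"
proof (cases "v n = 1")
  case True
  have "(\<Sum>i<Suc n. (v i)\<^sup>2) = (\<Sum>i<n. (v i)\<^sup>2) + 1" using True by simp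
  hence "(\<Sum>i<n. (v i)\<^sup>2) = 0" using unit by simp
  hence z: "\<forall>i<n. v i = 0" by (simp add: sum_nonneg_eq_0_iff)
  define Q where "Q i j = (if i = j then 1 else (0::real))" for i j :: nat
  have "symm (Suc n) Q" unfolding symm_def Q_def by auto
  moreover have "mm (Suc n) Q Q i j = (if i = j then 1 else 0)" if "i < Suc n" "j < Suc n" for i j
    unfolding mm_def Q_def using that by (simp add: sum.delta)
  moreover have "Q i n = v i" if "i < Suc n" for i
    using that z True unfolding Q_def by (cases "i = n") auto
  ultimately show ?thesis by blast
next
  case False
  define w where "w i = v i - (if i = n then 1 else 0)" for i
  have vn: "v n \<le> 1"
  proof -
    have "(v n)\<^sup>2 \<le> (\<Sum>i<Suc n. (v i)\<^sup>2)"
      by (rule member_le_sum) auto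
    hence "(v n)\<^sup>2 \<le> 1" using unit by simp
    show ?thesis
    proof (rule ccontr)
      assume "\<not> v n \<le> 1"
      hence "1 < (v n)\<^sup>2" by (simp add: one_less_power)
      thus False using \<open>(v n)\<^sup>2 \<le> 1\<close> by simp
    qed
  qed
  define c where "c = 2 - 2 * v n"
  have c: "c > 0" using vn False unfolding c_def by simp
  have ww: "(\<Sum>i<Suc n. w i * w i) = c"
  proof -
    have "(\<Sum>i<Suc n. w i * w i) = (\<Sum>i<Suc n. (v i)\<^sup>2 - 2 * (if i = n then v i else 0) + (if i = n then 1 else 0))"
      unfolding w_def by (intro sum.cong refl) (auto simp: power2_eq_square algebra_simps)
    also have "\<dots> = 1 - 2 * v n + 1" using unit by (simp add: sum.distrib sum_subtractf sum.delta')
    finally show ?thesis unfolding c_def by simp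
  qed
  define Q where "Q i j = (if i = j then 1 else 0) - 2 * w i * w j / c" for i j :: nat
  have "symm (Suc n) Q" unfolding symm_def Q_def by (auto simp: mult.commute)
  moreover have "mm (Suc n) Q Q i j = (if i = j then 1 else 0)" if "i < Suc n" "j < Suc n" for i j
  proof -
    let ?d = "\<lambda>a b. if a = b then 1 else (0::real)"
    have ex: "Q i k * Q k j = ?d i k * ?d k j - ?d i k * (2 * w k * w j / c) - (2 * w i * w k / c) * ?d k j
        + 4 * w i * w j / c^2 * (w k * w k)" for k
      unfolding Q_def by (simp add: algebra_simps power2_eq_square)
    have "mm (Suc n) Q Q i j = (\<Sum>k<Suc n. ?d i k * ?d k j) - (\<Sum>k<Suc n. ?d i k * (2 * w k * w j / c))
       - (\<Sum>k<Suc n. (2 * w i * w k / c) * ?d k j) + (\<Sum>k<Suc n. 4 * w i * w j / c^2 * (w k * w k))"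
      unfolding mm_def ex by (simp add: sum.distrib sum_subtractf)
    also have "(\<Sum>k<Suc n. ?d i k * ?d k j) = ?d i j" by (rule sum_delta_left[OF that(1)])
    also have "(\<Sum>k<Suc n. ?d i k * (2 * w k * w j / c)) = 2 * w i * w j / c" by (rule sum_delta_left[OF that(1)])
    also have "(\<Sum>k<Suc n. (2 * w i * w k / c) * ?d k j) = 2 * w i * w j / c" by (rule sum_delta_right[OF that(2)])
    also have "(\<Sum>k<Suc n. 4 * w i * w j / c^2 * (w k * w k)) = 4 * w i * w j / c^2 * c"
      by (subst sum_distrib_left[symmetric]) (simp only: ww)
    finally show ?thesis using c by (simp add: power2_eq_square field_simps)
  qed
  moreover have "Q i n = v i" if "i < Suc n" for i
  proof -
    have wn: "w n = v n - 1" unfolding w_def by simp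
    have "Q i n = (if i = n then 1 else 0) - 2 * w i * (v n - 1) / (2 - 2 * v n)"
      unfolding Q_def c_def wn ..
    also have "\<dots> = (if i = n then 1 else 0) + w i" using c unfolding c_def by (simp add: field_simps)
    finally show ?thesis unfolding w_def by simp
  qed
  ultimately show ?thesis by blast
qed

lemma mm_id_left:
  assumes "\<forall>i<m. \<forall>j<m. P i j = (if i = j then 1 else 0)" "i < m"
  shows "mm m P X i j = X i j"
proof -
  have "mm m P X i j = (\<Sum>k<m. (if i = k then 1 else 0) * X k j)"
    unfolding mm_def using assms by (intro sum.cong) auto
  thus ?thesis using assms(2) by simp
qed

lemma mm_id_right:
  assumes "\<forall>i<m. \<forall>j<m. P i j = (if i = j then 1 else 0)" "j < m"
  shows "mm m X P i j = X i j"
proof -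
  have "mm m X P i j = (\<Sum>k<m. X i k * (if k = j then 1 else 0))"
    unfolding mm_def using assms by (intro sum.cong) auto
  thus ?thesis using assms(2) by simp
qed

lemma mm_cong_left: "(\<And>k. k < m \<Longrightarrow> A i k = A' i k) \<Longrightarrow> mm m A B i j = mm m A' B i j"
  unfolding mm_def by auto
lemma mm_cong_right: "(\<And>k. k < m \<Longrightarrow> B k j = B' k j) \<Longrightarrow> mm m A B i j = mm m A B' i j"
  unfolding mm_def by auto

lemma conj_back:
  assumes QQ: "\<forall>i<m. \<forall>j<m. mm m Q Q i j = (if i = j then 1 else 0)" and ij: "i < m" "j < m"
  shows "mm m (mm m Q (mm m (mm m Q A) Q)) Q i j = A i j"
proof -
  have "mm m (mm m Q (mm m (mm m Q A) Q)) Q i j = mm m (mm m (mm m Q Q) A) (mm m Q Q) i j"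
  proof -
    have "mm m (mm m Q (mm m (mm m Q A) Q)) Q i j = mm m Q (mm m (mm m (mm m Q A) Q) Q) i j"
      by (rule mm_assoc)
    also have "\<dots> = mm m Q (mm m (mm m Q A) (mm m Q Q)) i j"
      by (intro mm_cong_right) (rule mm_assoc)
    also have "\<dots> = mm m (mm m Q (mm m Q A)) (mm m Q Q) i j"
      by (rule mm_assoc[symmetric])
    also have "\<dots> = mm m (mm m (mm m Q Q) A) (mm m Q Q) i j"
      by (intro mm_cong_left) (rule mm_assoc[symmetric])
    finally show ?thesis .
  qed
  also have "\<dots> = mm m (mm m Q Q) A i j"
    by (rule mm_id_right[OF QQ ij(2)])
  also have "\<dots> = A i j" by (rule mm_id_left[OF QQ ij(1)])
  finally show ?thesis .
qed

lemma orth_transform: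
  assumes Qs: "symm m Q" and QQ: "\<forall>i<m. \<forall>j<m. mm m Q Q i j = (if i = j then 1 else 0)"
    and on: "orthonormal m u" and co: "complete m u"
    and dec: "\<forall>i<m. \<forall>j<m. B i j = (\<Sum>k<m. \<mu> k * u k i * u k j)"
  defines "u2 \<equiv> \<lambda>k i. \<Sum>p<m. Q i p * u k p"
  shows "orthonormal m u2" "complete m u2"
    "\<forall>i<m. \<forall>j<m. mm m (mm m Q B) Q i j = (\<Sum>k<m. \<mu> k * u2 k i * u2 k j)"
proof -
  have Qsym: "Q i p = Q p i" if "i < m" "p < m" for i p using Qs that unfolding symm_def by auto
  show "orthonormal m u2" unfolding orthonormal_def
  proof (intro allI impI)
    fix k l assume kl: "k < m" "l < m"
    have "(\<Sum>i<m. u2 k i * u2 l i) = (\<Sum>i<m. \<Sum>p<m. \<Sum>q<m. Q i p * u k p * (Q i q * u l q))"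
      unfolding u2_def by (simp only: sum_product)
    also have "\<dots> = (\<Sum>p<m. \<Sum>q<m. \<Sum>i<m. Q i p * u k p * (Q i q * u l q))"
      by (rule rot3)
    also have "\<dots> = (\<Sum>p<m. \<Sum>q<m. u k p * u l q * mm m Q Q p q)"
      unfolding mm_def by (intro sum.cong refl) (auto simp: sum_distrib_left Qsym algebra_simps)
    also have "\<dots> = (\<Sum>p<m. \<Sum>q<m. u k p * u l q * (if p = q then 1 else 0))"
      using QQ by (intro sum.cong refl) auto
    also have "\<dots> = (\<Sum>p<m. u k p * u l p)" by (intro sum.cong refl, rule sum_delta_r1) auto
    finally show "(\<Sum>i<m. u2 k i * u2 l i) = (if k = l then 1 else 0)" using on kl unfolding orthonormal_def by simp
  qed
  show "complete m u2" unfolding complete_def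
  proof (intro allI impI)
    fix i j assume ij: "i < m" "j < m"
    have "(\<Sum>k<m. u2 k i * u2 k j) = (\<Sum>k<m. \<Sum>p<m. \<Sum>q<m. Q i p * u k p * (Q j q * u k q))"
      unfolding u2_def by (intro sum.cong refl) (rule sum_product)
    also have "\<dots> = (\<Sum>p<m. \<Sum>q<m. \<Sum>k<m. Q i p * u k p * (Q j q * u k q))"
      by (rule rot3)
    also have "\<dots> = (\<Sum>p<m. \<Sum>q<m. Q i p * Q j q * (\<Sum>k<m. u k p * u k q))"
      by (intro sum.cong refl) (auto simp: sum_distrib_left algebra_simps)
    also have "\<dots> = (\<Sum>p<m. \<Sum>q<m. Q i p * Q j q * (if p = q then 1 else 0))"
      using co unfolding complete_def by (intro sum.cong refl) auto
    also have "\<dots> = (\<Sum>p<m. Q i p * Q j p)" by (intro sum.cong refl, rule sum_delta_r1) auto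
    also have "\<dots> = (\<Sum>p<m. Q i p * Q p j)" by (intro sum.cong refl) (auto simp: Qsym ij)
    also have "\<dots> = (if i = j then 1 else 0)" using QQ ij unfolding mm_def by auto
    finally show "(\<Sum>k<m. u2 k i * u2 k j) = (if i = j then 1 else 0)" .
  qed
  show "\<forall>i<m. \<forall>j<m. mm m (mm m Q B) Q i j = (\<Sum>k<m. \<mu> k * u2 k i * u2 k j)"
  proof (intro allI impI)
    fix i j assume ij: "i < m" "j < m"
    have "mm m (mm m Q B) Q i j = (\<Sum>q<m. \<Sum>p<m. Q i p * B p q * Q q j)"
      unfolding mm_def by (simp add: sum_distrib_right)
    also have "\<dots> = (\<Sum>q<m. \<Sum>p<m. \<Sum>k<m. \<mu> k * (Q i p * u k p) * (Q j q * u k q))"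
      using dec ij by (intro sum.cong refl) (auto simp: sum_distrib_left sum_distrib_right Qsym algebra_simps)
    also have "\<dots> = (\<Sum>p<m. \<Sum>q<m. \<Sum>k<m. \<mu> k * (Q i p * u k p) * (Q j q * u k q))"
      by (rule swap12)
    also have "\<dots> = (\<Sum>k<m. \<Sum>p<m. \<Sum>q<m. \<mu> k * (Q i p * u k p) * (Q j q * u k q))"
      by (rule rot3')
    also have "\<dots> = (\<Sum>k<m. \<mu> k * u2 k i * u2 k j)"
      unfolding u2_def
    proof (intro sum.cong refl)
      fix k
      show "(\<Sum>p<m. \<Sum>q<m. \<mu> k * (Q i p * u k p) * (Q j q * u k q)) =
        \<mu> k * (\<Sum>p<m. Q i p * u k p) * (\<Sum>q<m. Q j q * u k q)"
        by (rule sum_prod_helper)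
    qed
    finally show "mm m (mm m Q B) Q i j = (\<Sum>k<m. \<mu> k * u2 k i * u2 k j)" .
  qed
qed

theorem spectral:
  "symm n A \<Longrightarrow> \<exists>u \<mu>. orthonormal n u \<and> complete n u \<and> (\<forall>i<n. \<forall>j<n. A i j = (\<Sum>k<n. \<mu> k * u k i * u k j))"
proof (induction n arbitrary: A)
  case 0
  show ?case unfolding orthonormal_def complete_def by auto
next
  case (Suc n)
  let ?m = "Suc n"
  from real_eigenvector_fun[OF Suc.prems] obtain lam v where
    v1: "(\<Sum>i<?m. (v i)\<^sup>2) = 1" and ev: "\<forall>i<?m. (\<Sum>j<?m. A i j * v j) = lam * v i" by auto
  from householder[OF v1] obtain Q where Qs: "symm ?m Q"
    and QQ: "\<forall>i<?m. \<forall>j<?m. mm ?m Q Q i j = (if i = j then 1 else 0)" and Qv: "\<forall>i<?m. Q i n = v i"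
    by blast
  have Qsym: "Q i p = Q p i" if "i < ?m" "p < ?m" for i p using Qs that unfolding symm_def by auto
  have Asym: "A i p = A p i" if "i < ?m" "p < ?m" for i p using Suc.prems that unfolding symm_def by auto
  define B where "B = mm ?m (mm ?m Q A) Q"
  have Bexp: "B i j = (\<Sum>p<?m. \<Sum>q<?m. Q i p * A p q * Q q j)" for i j
    unfolding B_def mm_def by (simp only: sum_distrib_right) (rule sum.swap)
  have Bs: "symm ?m B" unfolding symm_def
  proof (intro allI impI)
    fix i j assume ij: "i < ?m" "j < ?m"
    have "B i j = (\<Sum>q<?m. \<Sum>p<?m. Q j q * A q p * Q p i)"
      unfolding Bexp by (subst sum.swap) (intro sum.cong refl, auto simp: Qsym Asym ij)
    thus "B i j = B j i" unfolding Bexp .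
  qed
  have Bn: "B i n = (if i = n then lam else 0)" if i: "i < ?m" for i
  proof -
    have "B i n = (\<Sum>p<?m. \<Sum>q<?m. Q i p * (A p q * v q))"
      unfolding Bexp using Qv by (intro sum.cong refl) (simp only: mult.assoc, simp)
    also have "\<dots> = (\<Sum>p<?m. Q i p * (\<Sum>q<?m. A p q * v q))"
      by (simp only: sum_distrib_left)
    also have "\<dots> = (\<Sum>p<?m. Q i p * (lam * v p))"
      using ev by (intro sum.cong refl) auto
    also have "\<dots> = lam * (\<Sum>p<?m. Q i p * v p)"
      by (simp add: sum_distrib_left algebra_simps del: lessThan_Suc)
    also have "\<dots> = lam * (\<Sum>p<?m. Q i p * Q p n)"
      using Qv by (intro arg_cong[where f="(*) lam"] sum.cong refl) auto
    also have "\<dots> = lam * (if i = n then 1 else 0)" using QQ i unfolding mm_def by auto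
    finally show ?thesis by simp
  qed
  have "symm n B" using Bs unfolding symm_def by auto
  from Suc.IH[OF this] obtain u' \<mu>' where on': "orthonormal n u'" and co': "complete n u'"
    and dec': "\<forall>i<n. \<forall>j<n. B i j = (\<Sum>k<n. \<mu>' k * u' k i * u' k j)" by blast
  define uB where "uB k i = (if k < n then (if i < n then u' k i else 0) else (if i = n then 1 else 0))" for k i
  define \<mu>B where "\<mu>B k = (if k < n then \<mu>' k else lam)" for k
  have onB: "orthonormal ?m uB" unfolding orthonormal_def
  proof (intro allI impI)
    fix k l assume kl: "k < ?m" "l < ?m"
    have "(\<Sum>i<?m. uB k i * uB l i) = (\<Sum>i<n. uB k i * uB l i) + uB k n * uB l n" by simp
    thus "(\<Sum>i<?m. uB k i * uB l i) = (if k = l then 1 else 0)"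
      using on' kl unfolding orthonormal_def uB_def by (auto simp: less_Suc_eq)
  qed
  have coB: "complete ?m uB" unfolding complete_def
  proof (intro allI impI)
    fix i j assume ij: "i < ?m" "j < ?m"
    have "(\<Sum>k<?m. uB k i * uB k j) = (\<Sum>k<n. uB k i * uB k j) + uB n i * uB n j" by simp
    thus "(\<Sum>k<?m. uB k i * uB k j) = (if i = j then 1 else 0)"
      using co' ij unfolding complete_def uB_def by (auto simp: less_Suc_eq)
  qed
  have decB: "\<forall>i<?m. \<forall>j<?m. B i j = (\<Sum>k<?m. \<mu>B k * uB k i * uB k j)"
  proof (intro allI impI)
    fix i j assume ij: "i < ?m" "j < ?m"
    have e: "(\<Sum>k<?m. \<mu>B k * uB k i * uB k j) = (\<Sum>k<n. \<mu>B k * uB k i * uB k j) + \<mu>B n * uB n i * uB n j"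
      by simp
    show "B i j = (\<Sum>k<?m. \<mu>B k * uB k i * uB k j)"
    proof (cases "i < n \<and> j < n")
      case True
      thus ?thesis unfolding e using dec' unfolding uB_def \<mu>B_def by auto
    next
      case False
      hence "i = n \<or> j = n" using ij by auto
      hence "B i j = (if i = n \<and> j = n then lam else 0)"
        using Bn ij Bs unfolding symm_def by (metis lessI)
      thus ?thesis unfolding e using ij False unfolding uB_def \<mu>B_def by (auto simp: less_Suc_eq)
    qed
  qed
  from orth_transform[OF Qs QQ onB coB decB] obtain u2 where
    "orthonormal ?m u2" "complete ?m u2" "\<forall>i<?m. \<forall>j<?m. mm ?m (mm ?m Q B) Q i j = (\<Sum>k<?m. \<mu>B k * u2 k i * u2 k j)"
    by blast
  moreover have "mm ?m (mm ?m Q B) Q i j = A i j" if "i < ?m" "j < ?m" for i j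
    unfolding B_def using conj_back[OF QQ that] .
  ultimately show ?case by auto
qed

definition bf :: "nat \<Rightarrow> (nat \<Rightarrow> nat \<Rightarrow> real) \<Rightarrow> (nat \<Rightarrow> real) \<Rightarrow> (nat \<Rightarrow> real) \<Rightarrow> real" where
  "bf n B x y = (\<Sum>i<n. \<Sum>j<n. x i * B i j * y j)"

definition hyp :: "nat \<Rightarrow> (nat \<Rightarrow> nat \<Rightarrow> real) \<Rightarrow> bool" where
  "hyp n B \<longleftrightarrow> (\<forall>x v. bf n B x x > 0 \<longrightarrow> (bf n B x v)\<^sup>2 \<ge> bf n B x x * bf n B v v)"

lemma bf_sym: "symm n B \<Longrightarrow> bf n B x y = bf n B y x"
  unfolding bf_def symm_def by (subst sum.swap) (auto intro!: sum.cong simp: mult.commute)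

lemma bf_add_left: "bf n B (\<lambda>i. x i + y i) z = bf n B x z + bf n B y z"
  unfolding bf_def by (simp add: algebra_simps sum.distrib)
lemma bf_add_right: "bf n B z (\<lambda>i. x i + y i) = bf n B z x + bf n B z y"
  unfolding bf_def by (simp add: algebra_simps sum.distrib)
lemma bf_scale_left: "bf n B (\<lambda>i. c * x i) z = c * bf n B x z"
  unfolding bf_def by (simp add: algebra_simps sum_distrib_left)
lemma bf_scale_right: "bf n B z (\<lambda>i. c * x i) = c * bf n B z x"
  unfolding bf_def by (simp add: algebra_simps sum_distrib_left)

lemma quad_disc:
  fixes a b c l :: real
  assumes "a > 0" "a * l^2 - 2 * b * l + c \<le> 0"
  shows "b^2 \<ge> a * c"
proof -
  have "a * (a * l^2 - 2 * b * l + c) = (a * l - b)^2 - (b^2 - a * c)"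
    by (simp add: power2_eq_square algebra_simps)
  moreover have "a * (a * l^2 - 2 * b * l + c) \<le> 0"
    using assms(1) assms(2) by (intro mult_nonneg_nonpos) auto
  moreover have "(a * l - b)^2 \<ge> 0" by simp
  ultimately show ?thesis by linarith
qed

lemma hyp_of_hyperplane:
  assumes sym: "symm n B" and nsd: "\<forall>v. (\<Sum>i<n. g i * v i) = 0 \<longrightarrow> bf n B v v \<le> 0"
  shows "hyp n B"
  unfolding hyp_def
proof (intro allI impI)
  fix x v assume x: "bf n B x x > 0"
  define gx where "gx = (\<Sum>i<n. g i * x i)"
  have gx: "gx \<noteq> 0" using nsd x unfolding gx_def by force
  define l where "l = (\<Sum>i<n. g i * v i) / gx"
  define w where "w i = v i + (- l) * x i" for i
  have "(\<Sum>i<n. g i * w i) = (\<Sum>i<n. g i * v i) - l * gx"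
    unfolding w_def gx_def by (simp add: algebra_simps sum.distrib sum_subtractf sum_distrib_left)
  also have "\<dots> = 0" unfolding l_def using gx by simp
  finally have "bf n B w w \<le> 0" using nsd by blast
  moreover have "bf n B w w = bf n B x x * l^2 - 2 * bf n B x v * l + bf n B v v"
    unfolding w_def bf_add_left bf_add_right bf_scale_left bf_scale_right
    using bf_sym[OF sym, of x v] by (simp add: power2_eq_square algebra_simps)
  ultimately show "(bf n B x v)\<^sup>2 \<ge> bf n B x x * bf n B v v"
    using quad_disc[OF x] by simp
qed

lemma bf_spectral:
  assumes dec: "\<forall>i<n. \<forall>j<n. B i j = (\<Sum>k<n. \<mu> k * u k i * u k j)"
  shows "bf n B v w = (\<Sum>k<n. \<mu> k * (\<Sum>i<n. u k i * v i) * (\<Sum>j<n. u k j * w j))"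
proof -
  have "bf n B v w = (\<Sum>i<n. \<Sum>j<n. \<Sum>k<n. \<mu> k * (u k i * v i) * (u k j * w j))"
    unfolding bf_def using dec by (intro sum.cong refl) (auto simp: sum_distrib_left sum_distrib_right algebra_simps)
  also have "\<dots> = (\<Sum>k<n. \<Sum>i<n. \<Sum>j<n. \<mu> k * (u k i * v i) * (u k j * w j))"
    by (rule rot3')
  also have "\<dots> = (\<Sum>k<n. \<mu> k * (\<Sum>i<n. u k i * v i) * (\<Sum>j<n. u k j * w j))"
    by (intro sum.cong refl) (rule sum_prod_helper)
  finally show ?thesis .
qed

lemma hyp_of_spectral:
  assumes sym: "symm n B" and dec: "\<forall>i<n. \<forall>j<n. B i j = (\<Sum>k<n. \<mu> k * u k i * u k j)"
    and card: "card {k. k < n \<and> \<mu> k > 0} \<le> 1"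
  shows "hyp n B"
proof (cases "\<exists>k0<n. \<mu> k0 > 0")
  case True
  then obtain k0 where k0: "k0 < n" "\<mu> k0 > 0" by blast
  have only: "\<mu> k \<le> 0" if "k < n" "k \<noteq> k0" for k
  proof (rule ccontr)
    assume "\<not> \<mu> k \<le> 0"
    hence "{k, k0} \<subseteq> {k. k < n \<and> \<mu> k > 0}" using that k0 by auto
    hence "card {k, k0} \<le> card {k. k < n \<and> \<mu> k > 0}" by (intro card_mono) auto
    thus False using card that by auto
  qed
  show ?thesis
  proof (rule hyp_of_hyperplane[OF sym, of "u k0"], intro allI impI)
    fix v assume v: "(\<Sum>i<n. u k0 i * v i) = 0"
    have "bf n B v v = (\<Sum>k<n. \<mu> k * (\<Sum>i<n. u k i * v i)^2)"
      unfolding bf_spectral[OF dec] by (simp add: power2_eq_square mult.assoc)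
    also have "\<dots> \<le> 0"
    proof (rule sum_nonpos)
      fix k assume k: "k \<in> {..<n}"
      show "\<mu> k * (\<Sum>i<n. u k i * v i)^2 \<le> 0"
      proof (cases "k = k0")
        case True thus ?thesis using v by simp
      next
        case False thus ?thesis using only[of k] k by (simp add: mult_nonpos_nonneg)
      qed
    qed
    finally show "bf n B v v \<le> 0" .
  qed
next
  case False
  show ?thesis
  proof (rule hyp_of_hyperplane[OF sym, of "\<lambda>_. 0"], intro allI impI)
    fix v :: "nat \<Rightarrow> real"
    have "bf n B v v = (\<Sum>k<n. \<mu> k * (\<Sum>i<n. u k i * v i)^2)"
      unfolding bf_spectral[OF dec] by (simp add: power2_eq_square mult.assoc)
    also have "\<dots> \<le> 0" using False by (intro sum_nonpos mult_nonpos_nonneg) auto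
    finally show "bf n B v v \<le> 0" .
  qed
qed

lemma order_linear_prod:
  fixes n :: nat shows "order x (\<Prod>k<n. [:- (\<mu> k :: real), 1:]) = card {k. k < n \<and> \<mu> k = x}"
proof (induction n)
  case 0 thus ?case by simp
next
  case (Suc n)
  have nz: "(\<Prod>k<Suc n. [:- \<mu> k, 1:]) \<noteq> 0" by (subst prod_zero_iff) auto
  have "order x (\<Prod>k<Suc n. [:- \<mu> k, 1:]) = order x ((\<Prod>k<n. [:- \<mu> k, 1:]) * [:- \<mu> n, 1:])"
    by simp
  also have "\<dots> = order x (\<Prod>k<n. [:- \<mu> k, 1:]) + order x [:- \<mu> n, 1:]"
    using nz by (intro order_mult) simp
  also have "order x [:- \<mu> n, 1:] = (if \<mu> n = x then 1 else 0)"
  proof (cases "\<mu> n = x")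
    case True thus ?thesis using order_power_n_n[of x 1] by simp
  next
    case False
    have "order x [:- \<mu> n, 1:] = 0" by (rule order_0I) (use False in simp)
    thus ?thesis using False by simp
  qed
  finally have o: "order x (\<Prod>k<Suc n. [:- \<mu> k, 1:]) = card {k. k < n \<and> \<mu> k = x} + (if \<mu> n = x then 1 else 0)"
    using Suc.IH by simp
  have "{k. k < Suc n \<and> \<mu> k = x} = {k. k < n \<and> \<mu> k = x} \<union> (if \<mu> n = x then {n} else {})"
    by (auto simp: less_Suc_eq)
  thus ?case unfolding o by (auto simp: card_insert_if)
qed

lemma prod_list_upt_conv: "prod_list (map f [0..<n]) = (\<Prod>k<n. f k :: 'a :: comm_monoid_mult)"
  by (induction n) auto

lemma antiferro_hyp:
  assumes "antiferromagnetic n G"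
  shows "hyp n (\<lambda>i j. G $$ (i,j))" "symm n (\<lambda>i j. G $$ (i,j))"
proof -
  let ?g = "\<lambda>i j. G $$ (i,j)"
  from assms have G: "G \<in> carrier_mat n n" and GT: "G\<^sup>T = G" and np: "num_pos_eigenvalues G \<le> 1"
    unfolding antiferromagnetic_def weighted_graph_def by auto
  show sym: "symm n ?g" unfolding symm_def
  proof (intro allI impI)
    fix i j assume "i < n" "j < n"
    thus "G $$ (i,j) = G $$ (j,i)" using arg_cong[OF GT, of "\<lambda>M. M $$ (i,j)"] G by auto
  qed
  from spectral[OF sym] obtain u \<mu> where on: "orthonormal n u" and co: "complete n u"
    and dec: "\<forall>i<n. \<forall>j<n. ?g i j = (\<Sum>k<n. \<mu> k * u k i * u k j)" by blast
  define U where "U = mat n n (\<lambda>(i,k). u k i)"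
  define D where "D = mat n n (\<lambda>(i,j). if i = j then \<mu> i else 0)"
  have U: "U \<in> carrier_mat n n" and D: "D \<in> carrier_mat n n" unfolding U_def D_def by auto
  have UUT: "U * U\<^sup>T = 1\<^sub>m n"
    using co unfolding complete_def U_def
    by (intro eq_matI) (auto simp: scalar_prod_def atLeast0LessThan)
  have UTU: "U\<^sup>T * U = 1\<^sub>m n"
    using on unfolding orthonormal_def U_def
    by (intro eq_matI) (auto simp: scalar_prod_def atLeast0LessThan)
  have UD: "U * D = mat n n (\<lambda>(i,k). u k i * \<mu> k)"
  proof (intro eq_matI)
    fix i k assume ik: "i < dim_row (mat n n (\<lambda>(i,k). u k i * \<mu> k))" "k < dim_col (mat n n (\<lambda>(i,k). u k i * \<mu> k))"
    have "(U * D) $$ (i,k) = (\<Sum>l<n. u l i * (if l = k then \<mu> l else 0))"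
      using ik unfolding U_def D_def by (simp add: scalar_prod_def atLeast0LessThan)
    also have "\<dots> = (\<Sum>l<n. u l i * \<mu> l * (if l = k then 1 else 0))" by (intro sum.cong) auto
    also have "\<dots> = u k i * \<mu> k" using ik by simp
    finally show "(U * D) $$ (i,k) = mat n n (\<lambda>(i,k). u k i * \<mu> k) $$ (i,k)" using ik by simp
  qed (auto simp: U_def D_def)
  have GUDU: "G = U * D * U\<^sup>T"
  proof (intro eq_matI)
    fix i j assume ij: "i < dim_row (U * D * U\<^sup>T)" "j < dim_col (U * D * U\<^sup>T)"
    hence ij': "i < n" "j < n" using U D by auto
    have "(U * D * U\<^sup>T) $$ (i,j) = (\<Sum>k<n. u k i * \<mu> k * u k j)"
      unfolding UD using ij' unfolding U_def by (simp add: scalar_prod_def atLeast0LessThan)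
    thus "G $$ (i,j) = (U * D * U\<^sup>T) $$ (i,j)" using dec ij' by (simp add: algebra_simps)
  qed (use G U D in auto)
  have "similar_mat_wit G D U U\<^sup>T"
    unfolding similar_mat_wit_def Let_def using G U D UUT UTU GUDU by auto
  hence "similar_mat G D" unfolding similar_mat_def by blast
  hence "char_poly G = char_poly D" by (rule char_poly_similar)
  also have "\<dots> = (\<Prod>a\<leftarrow>diag_mat D. [:- a, 1:])"
    by (rule char_poly_upper_triangular[OF D]) (auto simp: upper_triangular_def D_def)
  also have "diag_mat D = map \<mu> [0..<n]" unfolding diag_mat_def D_def by auto
  finally have cp: "char_poly G = (\<Prod>k<n. [:- \<mu> k, 1:])"
    using prod_list_upt_conv[of "(\<lambda>a. [:- a, 1:]) \<circ> \<mu>" n] by simp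
  have ev: "eigenvalue G x \<longleftrightarrow> (\<exists>k<n. \<mu> k = x)" for x
  proof -
    have "eigenvalue G x \<longleftrightarrow> poly (char_poly G) x = 0" by (rule eigenvalue_root_char_poly[OF G])
    also have "\<dots> \<longleftrightarrow> (\<exists>k<n. \<mu> k = x)" unfolding cp poly_prod by (auto simp: prod_zero_iff)
    finally show ?thesis .
  qed
  let ?K = "{k. k < n \<and> \<mu> k > 0}"
  have X: "{x. eigenvalue G x \<and> x > 0} = \<mu> ` ?K" using ev by auto
  have "num_pos_eigenvalues G = (\<Sum>x\<in>\<mu> ` ?K. card {k. k < n \<and> \<mu> k = x})"
    unfolding num_pos_eigenvalues_def X cp order_linear_prod ..
  also have "\<dots> = (\<Sum>x\<in>\<mu> ` ?K. card {k. k \<in> ?K \<and> \<mu> k = x})"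
    by (intro sum.cong refl arg_cong[where f = card]) auto
  also have "\<dots> = (\<Sum>x\<in>\<mu> ` ?K. \<Sum>k\<in>{k. k \<in> ?K \<and> \<mu> k = x}. 1)" by simp
  also have "\<dots> = (\<Sum>k\<in>?K. 1)" by (rule sum.image_gen[symmetric]) simp
  also have "\<dots> = card ?K" by simp
  finally have "card ?K \<le> 1" using np by simp
  from hyp_of_spectral[OF sym dec this] show "hyp n ?g" .
qed

definition Ed :: "nat \<Rightarrow> (nat \<times> nat) set" where "Ed t = {(u,v). u < v \<and> v < t}"

definition Vol :: "nat \<Rightarrow> nat \<Rightarrow> (nat \<Rightarrow> nat \<Rightarrow> real) \<Rightarrow> (nat \<Rightarrow> nat \<Rightarrow> real) \<Rightarrow> real" where
  "Vol t n g x = (\<Sum>\<phi>\<in>{0..<t} \<rightarrow>\<^sub>E {0..<n}. (\<Prod>(u,v)\<in>Ed t. g (\<phi> u) (\<phi> v)) * (\<Prod>u<t. x u (\<phi> u)))"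

lemma finite_Ed[simp]: "finite (Ed t)"
proof -
  have "Ed t \<subseteq> {..<t} \<times> {..<t}" unfolding Ed_def by auto
  thus ?thesis by (rule finite_subset) auto
qed

lemma volume_Kt_Vol: "volume_Kt t n G x = Vol t n (\<lambda>i j. G $$ (i,j)) x"
  unfolding volume_Kt_def Vol_def Ed_def ..

lemma PiE_lt:
  fixes t n u :: nat
  shows "\<phi> \<in> {0..<t} \<rightarrow>\<^sub>E {0..<n} \<Longrightarrow> u < t \<Longrightarrow> \<phi> u < n"
  using PiE_mem[of \<phi> "{0..<t}" "\<lambda>_. {0..<n}" u] by auto

lemma PiE_Ed:
  fixes t n :: nat
  shows "\<phi> \<in> {0..<t} \<rightarrow>\<^sub>E {0..<n} \<Longrightarrow> (a,b) \<in> Ed t \<Longrightarrow> \<phi> a < n \<and> \<phi> b < n"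
  unfolding Ed_def using PiE_lt[of \<phi> t n a] PiE_lt[of \<phi> t n b] by auto

lemma sum_PiE_insert:
  assumes "x \<notin> S"
  shows "(\<Sum>\<phi>\<in>Pi\<^sub>E (insert x S) T. F \<phi>) = (\<Sum>(i,\<psi>)\<in>T x \<times> Pi\<^sub>E S T. F (\<psi>(x := i)))"
  unfolding PiE_insert_eq by (subst sum.reindex[OF inj_combinator[OF assms]]) (simp add: comp_def case_prod_beta)

lemma Vol_cong:
  assumes "\<And>u j. u < t \<Longrightarrow> j < n \<Longrightarrow> x u j = x' u j"
  shows "Vol t n g x = Vol t n g x'"
  unfolding Vol_def using assms by (intro sum.cong refl arg_cong2[where f="(*)"] prod.cong) (auto dest: PiE_lt)

lemma Vol_g_cong:
  assumes "\<And>i j. i < n \<Longrightarrow> j < n \<Longrightarrow> g i j = g' i j"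
  shows "Vol t n g x = Vol t n g' x"
  unfolding Vol_def using assms by (intro sum.cong refl arg_cong2[where f="(*)"] prod.cong)
    (auto dest: PiE_Ed)

definition gnn :: "nat \<Rightarrow> (nat \<Rightarrow> nat \<Rightarrow> real) \<Rightarrow> bool" where
  "gnn n g \<longleftrightarrow> (\<forall>i<n. \<forall>j<n. g i j \<ge> 0)"
definition xnn :: "nat \<Rightarrow> nat \<Rightarrow> (nat \<Rightarrow> nat \<Rightarrow> real) \<Rightarrow> bool" where
  "xnn t n x \<longleftrightarrow> (\<forall>u<t. \<forall>j<n. x u j \<ge> 0)"

lemma W_nonneg: "gnn n g \<Longrightarrow> \<phi> \<in> {0..<t} \<rightarrow>\<^sub>E {0..<n} \<Longrightarrow> (\<Prod>(u,v)\<in>Ed t. g (\<phi> u) (\<phi> v)) \<ge> 0"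
  unfolding gnn_def by (intro prod_nonneg) (auto dest: PiE_Ed)

lemma Vol_nonneg: "gnn n g \<Longrightarrow> xnn t n x \<Longrightarrow> Vol t n g x \<ge> 0"
  unfolding Vol_def
  by (intro sum_nonneg mult_nonneg_nonneg W_nonneg prod_nonneg) (auto simp: xnn_def dest: PiE_lt)

lemma Vol_mono:
  assumes "gnn n g" "xnn t n x" "\<And>u j. u < t \<Longrightarrow> j < n \<Longrightarrow> x u j \<le> x' u j"
  shows "Vol t n g x \<le> Vol t n g x'"
  unfolding Vol_def
proof (intro sum_mono mult_left_mono W_nonneg[OF assms(1)] prod_mono conjI)
  fix \<phi> u assume "\<phi> \<in> {0..<t} \<rightarrow>\<^sub>E {0..<n}" "u \<in> {..<t}"
  thus "0 \<le> x u (\<phi> u)" "x u (\<phi> u) \<le> x' u (\<phi> u)" using assms(2,3) unfolding xnn_def by (auto dest: PiE_lt)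
qed

lemma Vol_scale: "Vol t n g (\<lambda>u j. c u * x u j) = (\<Prod>u<t. c u) * Vol t n g x"
  unfolding Vol_def by (simp add: prod.distrib sum_distrib_left algebra_simps)

lemma prod_upd: fixes t :: nat shows "u < t \<Longrightarrow> (\<Prod>w<t. (x(u := f)) w (\<phi> w)) = f (\<phi> u) * (\<Prod>w\<in>{..<t} - {u}. x w (\<phi> w))"
  by (subst prod.remove[of _ u]) (auto intro!: prod.cong)

lemma Vol_upd_expand:
  assumes "u < t"
  shows "Vol t n g (x(u := f)) = (\<Sum>\<phi>\<in>{0..<t} \<rightarrow>\<^sub>E {0..<n}. (\<Prod>(u,v)\<in>Ed t. g (\<phi> u) (\<phi> v)) * f (\<phi> u) * (\<Prod>w\<in>{..<t} - {u}. x w (\<phi> w)))"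
  unfolding Vol_def prod_upd[OF assms] by (simp add: mult.assoc)

lemma Vol_slot_sum:
  assumes "u < t" "finite I"
  shows "Vol t n g (x(u := (\<lambda>j. \<Sum>i\<in>I. c i * f i j))) = (\<Sum>i\<in>I. c i * Vol t n g (x(u := f i)))"
  unfolding Vol_upd_expand[OF assms(1)]
  by (simp add: sum_distrib_left sum_distrib_right algebra_simps) (rule sum.swap)

lemma Vol_slot_lin:
  assumes "u < t"
  shows "Vol t n g (x(u := (\<lambda>j. a * p j + b * q j))) = a * Vol t n g (x(u := p)) + b * Vol t n g (x(u := q))"
  unfolding Vol_upd_expand[OF assms(1)]
  by (simp add: sum_distrib_left sum_distrib_right algebra_simps sum.distrib)

lemma Vol_slot_zero:
  assumes "u < t"
  shows "Vol t n g (x(u := (\<lambda>j. 0))) = 0"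
  unfolding Vol_upd_expand[OF assms(1)] by simp

definition ev :: "nat \<Rightarrow> nat \<Rightarrow> real" where "ev i j = (if j = i then 1 else 0)"

lemma Vol_slot_unit:
  assumes "u < t"
  shows "Vol t n g (x(u := y)) = (\<Sum>i<n. y i * Vol t n g (x(u := ev i)))"
proof -
  have "Vol t n g (x(u := y)) = Vol t n g (x(u := (\<lambda>j. \<Sum>i<n. y i * ev i j)))"
    by (intro Vol_cong) (auto simp: ev_def if_distrib[of "\<lambda>z. _ * z"] sum.delta cong: if_cong)
  also have "\<dots> = (\<Sum>i<n. y i * Vol t n g (x(u := ev i)))" by (rule Vol_slot_sum[OF assms]) simp
  finally show ?thesis .
qed

lemma Ed_Suc: "Ed (Suc t) = Ed t \<union> (\<lambda>u. (u, t)) ` {..<t}"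
  unfolding Ed_def by (auto simp: less_Suc_eq)

lemma Vol_peel:
  "Vol (Suc t) n g x = (\<Sum>i<n. x t i * Vol t n g (\<lambda>u j. g j i * x u j))"
proof -
  let ?F = "\<lambda>\<phi>. (\<Prod>(u,v)\<in>Ed (Suc t). g (\<phi> u) (\<phi> v)) * (\<Prod>u<Suc t. x u (\<phi> u))"
  have ins: "{0..<Suc t} = insert t {0..<t}" by auto
  have "Vol (Suc t) n g x = (\<Sum>(i,\<psi>)\<in>{0..<n} \<times> ({0..<t} \<rightarrow>\<^sub>E {0..<n}). ?F (\<psi>(t := i)))"
    unfolding Vol_def ins by (rule sum_PiE_insert) simp
  also have "\<dots> = (\<Sum>i<n. \<Sum>\<psi>\<in>{0..<t} \<rightarrow>\<^sub>E {0..<n}. ?F (\<psi>(t := i)))"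
    by (subst sum.cartesian_product[symmetric]) (simp add: atLeast0LessThan)
  also have "\<dots> = (\<Sum>i<n. x t i * Vol t n g (\<lambda>u j. g j i * x u j))"
  proof (intro sum.cong refl)
    fix i assume i: "i \<in> {..<n}"
    have e: "?F (\<psi>(t := i)) = x t i * ((\<Prod>(u,v)\<in>Ed t. g (\<psi> u) (\<psi> v)) * (\<Prod>u<t. g (\<psi> u) i * x u (\<psi> u)))"
      for \<psi>
    proof -
      have d: "Ed t \<inter> (\<lambda>u. (u, t)) ` {..<t} = {}" unfolding Ed_def by auto
      have "(\<Prod>(u,v)\<in>Ed (Suc t). g ((\<psi>(t := i)) u) ((\<psi>(t := i)) v))
          = (\<Prod>(u,v)\<in>Ed t. g ((\<psi>(t := i)) u) ((\<psi>(t := i)) v)) * (\<Prod>(u,v)\<in>(\<lambda>u. (u, t)) ` {..<t}. g ((\<psi>(t := i)) u) ((\<psi>(t := i)) v))"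
        unfolding Ed_Suc by (rule prod.union_disjoint) (use d in auto)
      also have "(\<Prod>(u,v)\<in>Ed t. g ((\<psi>(t := i)) u) ((\<psi>(t := i)) v)) = (\<Prod>(u,v)\<in>Ed t. g (\<psi> u) (\<psi> v))"
        by (intro prod.cong) (auto simp: Ed_def)
      also have "(\<Prod>(u,v)\<in>(\<lambda>u. (u, t)) ` {..<t}. g ((\<psi>(t := i)) u) ((\<psi>(t := i)) v)) = (\<Prod>u<t. g (\<psi> u) i)"
        by (subst prod.reindex) (auto simp: inj_on_def intro!: prod.cong)
      finally have W: "(\<Prod>(u,v)\<in>Ed (Suc t). g ((\<psi>(t := i)) u) ((\<psi>(t := i)) v))
          = (\<Prod>(u,v)\<in>Ed t. g (\<psi> u) (\<psi> v)) * (\<Prod>u<t. g (\<psi> u) i)" .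
      have X: "(\<Prod>u<Suc t. x u ((\<psi>(t := i)) u)) = x t i * (\<Prod>u<t. x u (\<psi> u))"
        by (simp add: mult.commute)
      show ?thesis unfolding W X by (simp add: prod.distrib algebra_simps)
    qed
    show "(\<Sum>\<psi>\<in>{0..<t} \<rightarrow>\<^sub>E {0..<n}. ?F (\<psi>(t := i))) = x t i * Vol t n g (\<lambda>u j. g j i * x u j)"
      unfolding Vol_def sum_distrib_left by (rule sum.cong[OF refl]) (rule e)
  qed
  finally show ?thesis .
qed

lemma Ed_perm_bij:
  fixes \<sigma> :: "nat \<Rightarrow> nat"
  assumes bij: "bij_betw \<sigma> {..<t} {..<t}"
  defines "e \<equiv> \<lambda>(u,v). (min (\<sigma> u) (\<sigma> v), max (\<sigma> u) (\<sigma> v))"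
  shows "bij_betw e (Ed t) (Ed t)"
proof -
  have inj: "inj_on \<sigma> {..<t}" and img: "\<sigma> ` {..<t} = {..<t}" using bij unfolding bij_betw_def by auto
  have lt: "\<sigma> u < t" if "u < t" for u using img that by auto
  have sub: "e ` Ed t \<subseteq> Ed t"
  proof
    fix p assume "p \<in> e ` Ed t"
    then obtain u v where uv: "u < v" "v < t" and p: "p = e (u,v)" unfolding Ed_def by auto
    have "\<sigma> u \<noteq> \<sigma> v" using inj uv unfolding inj_on_def by (metis lessThan_iff less_trans less_irrefl)
    thus "p \<in> Ed t" unfolding p e_def Ed_def using lt uv by (auto simp: min_def max_def)
  qed
  have injE: "inj_on e (Ed t)"
  proof (rule inj_onI)
    fix p q assume p: "p \<in> Ed t" and q: "q \<in> Ed t" and eq: "e p = e q"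
    obtain u v where p': "p = (u,v)" "u < v" "v < t" using p unfolding Ed_def by auto
    obtain u' v' where q': "q = (u',v')" "u' < v'" "v' < t" using q unfolding Ed_def by auto
    have "{\<sigma> u, \<sigma> v} = {\<sigma> u', \<sigma> v'}"
      using eq unfolding p'(1) q'(1) e_def by (auto simp: min_def max_def split: if_splits)
    hence "{u, v} = {u', v'}"
    proof -
      assume h: "{\<sigma> u, \<sigma> v} = {\<sigma> u', \<sigma> v'}"
      have "\<sigma> ` {u,v} = \<sigma> ` {u',v'}" using h by simp
      moreover have "{u,v} \<subseteq> {..<t}" "{u',v'} \<subseteq> {..<t}" using p' q' by auto
      ultimately show ?thesis using inj by (meson inj_on_image_eq_iff)
    qed
    thus "p = q" unfolding p'(1) q'(1) using p'(2) q'(2)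
      by (metis doubleton_eq_iff less_asym)
  qed
  have "card (e ` Ed t) = card (Ed t)" using injE by (rule card_image)
  hence "e ` Ed t = Ed t" using sub by (intro card_subset_eq) auto
  thus ?thesis using injE unfolding bij_betw_def by auto
qed

lemma Vol_perm:
  assumes sym: "symm n g" and bij: "bij_betw \<sigma> {..<t} {..<t}"
  shows "Vol t n g (\<lambda>u. x (\<sigma> u)) = Vol t n g x"
proof -
  have inj: "inj_on \<sigma> {..<t}" and img: "\<sigma> ` {..<t} = {..<t}" using bij unfolding bij_betw_def by auto
  have lt: "\<sigma> u < t" if "u < t" for u using img that by auto
  define \<tau> where "\<tau> = inv_into {..<t} \<sigma>"
  have tlt: "\<tau> u < t" if "u < t" for u using that bij_betw_inv_into[OF bij] unfolding \<tau>_def bij_betw_def by auto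
  have st: "\<sigma> (\<tau> u) = u" if "u < t" for u using that img unfolding \<tau>_def by (auto intro: f_inv_into_f)
  have ts: "\<tau> (\<sigma> u) = u" if "u < t" for u using that inj unfolding \<tau>_def by (auto intro: inv_into_f_f)
  let ?P = "{0..<t} \<rightarrow>\<^sub>E {0..<n}"
  let ?F = "\<lambda>\<psi>. (\<Prod>(u,v)\<in>Ed t. g (\<psi> u) (\<psi> v)) * (\<Prod>u<t. x u (\<psi> u))"
  let ?F' = "\<lambda>\<phi>. (\<Prod>(u,v)\<in>Ed t. g (\<phi> u) (\<phi> v)) * (\<Prod>u<t. x (\<sigma> u) (\<phi> u))"
  have "Vol t n g x = (\<Sum>\<psi>\<in>?P. ?F \<psi>)" unfolding Vol_def ..
  also have "\<dots> = (\<Sum>\<phi>\<in>?P. ?F' \<phi>)"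
  proof (rule sum.reindex_bij_witness[where j = "\<lambda>\<psi>. restrict (\<lambda>u. \<psi> (\<sigma> u)) {0..<t}"
                                          and i = "\<lambda>\<phi>. restrict (\<lambda>u. \<phi> (\<tau> u)) {0..<t}"])
    fix \<psi> assume \<psi>: "\<psi> \<in> ?P"
    show "restrict (\<lambda>u. restrict (\<lambda>u. \<psi> (\<sigma> u)) {0..<t} (\<tau> u)) {0..<t} = \<psi>"
    proof (rule ext)
      fix u show "restrict (\<lambda>u. restrict (\<lambda>u. \<psi> (\<sigma> u)) {0..<t} (\<tau> u)) {0..<t} u = \<psi> u"
        using \<psi> tlt st by (cases "u < t") (auto simp: PiE_def extensional_def)
    qed
    show "restrict (\<lambda>u. \<psi> (\<sigma> u)) {0..<t} \<in> ?P" using \<psi> lt by (auto simp: PiE_lt)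
    show "?F' (restrict (\<lambda>u. \<psi> (\<sigma> u)) {0..<t}) = ?F \<psi>"
    proof -
      have a: "(\<Prod>u<t. x (\<sigma> u) (restrict (\<lambda>u. \<psi> (\<sigma> u)) {0..<t} u)) = (\<Prod>u<t. x u (\<psi> u))"
      proof -
        have "(\<Prod>u<t. x (\<sigma> u) (restrict (\<lambda>u. \<psi> (\<sigma> u)) {0..<t} u)) = (\<Prod>u<t. x (\<sigma> u) (\<psi> (\<sigma> u)))"
          by (intro prod.cong) auto
        also have "\<dots> = (\<Prod>u<t. x u (\<psi> u))"
          by (rule prod.reindex_bij_betw[OF bij, of "\<lambda>w. x w (\<psi> w)"])
        finally show ?thesis .
      qed
      have b: "(\<Prod>(u,v)\<in>Ed t. g (restrict (\<lambda>u. \<psi> (\<sigma> u)) {0..<t} u) (restrict (\<lambda>u. \<psi> (\<sigma> u)) {0..<t} v))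
             = (\<Prod>(u,v)\<in>Ed t. g (\<psi> u) (\<psi> v))"
      proof -
        let ?e = "\<lambda>(u,v). (min (\<sigma> u) (\<sigma> v), max (\<sigma> u) (\<sigma> v))"
        have "(\<Prod>(u,v)\<in>Ed t. g (restrict (\<lambda>u. \<psi> (\<sigma> u)) {0..<t} u) (restrict (\<lambda>u. \<psi> (\<sigma> u)) {0..<t} v))
            = (\<Prod>p\<in>Ed t. (\<lambda>(a,b). g (\<psi> a) (\<psi> b)) (?e p))"
        proof (intro prod.cong refl)
          fix p assume p: "p \<in> Ed t"
          then obtain u v where p': "p = (u,v)" "u < v" "v < t" unfolding Ed_def by auto
          have "\<psi> (\<sigma> u) < n" "\<psi> (\<sigma> v) < n" using \<psi> lt p' by (auto intro: PiE_lt)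
          thus "(case p of (u, v) \<Rightarrow> g (restrict (\<lambda>u. \<psi> (\<sigma> u)) {0..<t} u) (restrict (\<lambda>u. \<psi> (\<sigma> u)) {0..<t} v))
              = (\<lambda>(a,b). g (\<psi> a) (\<psi> b)) (?e p)"
            using sym p' unfolding symm_def by (auto simp: min_def max_def)
        qed
        also have "\<dots> = (\<Prod>(a,b)\<in>Ed t. g (\<psi> a) (\<psi> b))"
          by (rule prod.reindex_bij_betw[OF Ed_perm_bij[OF bij]])
        finally show ?thesis .
      qed
      show ?thesis unfolding a b ..
    qed
  next
    fix \<phi> assume \<phi>: "\<phi> \<in> ?P"
    show "restrict (\<lambda>u. restrict (\<lambda>u. \<phi> (\<tau> u)) {0..<t} (\<sigma> u)) {0..<t} = \<phi>"
    proof (rule ext)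
      fix u show "restrict (\<lambda>u. restrict (\<lambda>u. \<phi> (\<tau> u)) {0..<t} (\<sigma> u)) {0..<t} u = \<phi> u"
        using \<phi> lt ts by (cases "u < t") (auto simp: PiE_def extensional_def)
    qed
    show "restrict (\<lambda>u. \<phi> (\<tau> u)) {0..<t} \<in> ?P" using \<phi> tlt by (auto simp: PiE_lt)
  qed
  also have "\<dots> = Vol t n g (\<lambda>u. x (\<sigma> u))" unfolding Vol_def ..
  finally show ?thesis ..
qed

definition swp :: "nat \<Rightarrow> nat \<Rightarrow> nat \<Rightarrow> nat" where
  "swp a b u = (if u = a then b else if u = b then a else u)"

lemma swp_bij: "a < t \<Longrightarrow> b < t \<Longrightarrow> bij_betw (swp a b) {..<t} {..<t}"
  by (rule bij_betw_byWitness[where f' = "swp a b"]) (auto simp: swp_def)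

lemma Vol_swap:
  assumes "symm n g" "a < t" "b < t"
  shows "Vol t n g (\<lambda>u. x (swp a b u)) = Vol t n g x"
  using Vol_perm[OF assms(1) swp_bij[OF assms(2,3)]] .

lemma Vol_0: "Vol 0 n g x = 1"
  unfolding Vol_def Ed_def by simp

lemma Vol_peel_unit:
  assumes "i < n"
  shows "Vol (Suc t) n g (x(t := ev i)) = Vol t n g (\<lambda>u m. g m i * x u m)"
proof -
  have "Vol (Suc t) n g (x(t := ev i)) = (\<Sum>l<n. ev i l * Vol t n g (\<lambda>u m. g m l * (x(t := ev i)) u m))"
    by (subst Vol_peel) simp
  also have "\<dots> = (\<Sum>l<n. ev i l * Vol t n g (\<lambda>u m. g m l * x u m))"
    by (intro sum.cong refl arg_cong2[where f="(*)"] Vol_cong) auto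
  also have "\<dots> = Vol t n g (\<lambda>u m. g m i * x u m)"
    using assms unfolding ev_def by (simp add: if_distrib[of "\<lambda>z. z * _"] sum.delta cong: if_cong)
  finally show ?thesis .
qed

lemma Vol_pos:
  assumes "gnn n g" "xnn t n x" "\<phi>0 \<in> {0..<t} \<rightarrow>\<^sub>E {0..<n}"
    "\<And>u v. (u,v) \<in> Ed t \<Longrightarrow> g (\<phi>0 u) (\<phi>0 v) > 0" "\<And>u. u < t \<Longrightarrow> x u (\<phi>0 u) > 0"
  shows "Vol t n g x > 0"
  unfolding Vol_def
proof (rule sum_pos2[OF _ assms(3)])
  show "finite ({0..<t} \<rightarrow>\<^sub>E {0..<n})" by (simp add: finite_PiE)
  show "0 < (\<Prod>(u,v)\<in>Ed t. g (\<phi>0 u) (\<phi>0 v)) * (\<Prod>u<t. x u (\<phi>0 u))"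
    using assms(4,5) by (intro mult_pos_pos prod_pos) auto
  fix \<phi> assume "\<phi> \<in> {0..<t} \<rightarrow>\<^sub>E {0..<n}"
  thus "0 \<le> (\<Prod>(u,v)\<in>Ed t. g (\<phi> u) (\<phi> v)) * (\<Prod>u<t. x u (\<phi> u))"
    using assms(1,2) by (intro mult_nonneg_nonneg W_nonneg prod_nonneg) (auto simp: xnn_def dest: PiE_lt)
qed

definition Hs :: "nat \<Rightarrow> nat \<Rightarrow> (nat \<Rightarrow> nat \<Rightarrow> real) \<Rightarrow> (nat \<Rightarrow> real) \<Rightarrow> nat \<Rightarrow> nat \<Rightarrow> real" where
  "Hs T n g y i j = Vol T n g ((\<lambda>_. y)(T - 2 := ev j, T - 1 := ev i))"

lemma bf_two_slots:
  assumes ab: "a < T" "b < T" "a \<noteq> b"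
  shows "bf n (\<lambda>i j. Vol T n g (x(a := ev j, b := ev i))) v w = Vol T n g (x(a := w, b := v))"
proof -
  have "bf n (\<lambda>i j. Vol T n g (x(a := ev j, b := ev i))) v w
      = (\<Sum>i<n. v i * (\<Sum>j<n. w j * Vol T n g ((x(b := ev i))(a := ev j))))"
    unfolding bf_def using ab by (simp add: sum_distrib_left fun_upd_twist algebra_simps)
  also have "\<dots> = (\<Sum>i<n. v i * Vol T n g ((x(b := ev i))(a := w)))"
    using Vol_slot_unit[OF ab(1), of n g "x(b := ev i)" w for i] by simp
  also have "\<dots> = (\<Sum>i<n. v i * Vol T n g ((x(a := w))(b := ev i)))"
    using ab by (simp add: fun_upd_twist)
  also have "\<dots> = Vol T n g ((x(a := w))(b := v))"
    using Vol_slot_unit[OF ab(2), of n g "x(a := w)" v] by simp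
  finally show ?thesis by simp
qed

lemma Hs_bf:
  assumes "T \<ge> 2"
  shows "bf n (Hs T n g y) v w = Vol T n g ((\<lambda>_. y)(T - 2 := w, T - 1 := v))"
  unfolding Hs_def by (rule bf_two_slots) (use assms in auto)

lemma Hs_symm:
  assumes "symm n g" "T \<ge> 2"
  shows "symm n (Hs T n g y)"
  unfolding symm_def
proof (intro allI impI)
  fix i j assume "i < n" "j < n"
  let ?x = "(\<lambda>_. y)(T - 2 := ev j, T - 1 := ev i)"
  have "Hs T n g y i j = Vol T n g (\<lambda>u. ?x (swp (T - 2) (T - 1) u))"
    unfolding Hs_def using assms(2) by (subst Vol_swap[OF assms(1)]) auto
  also have "(\<lambda>u. ?x (swp (T - 2) (T - 1) u)) = (\<lambda>_. y)(T - 2 := ev i, T - 1 := ev j)"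
    using assms(2) by (intro ext) (auto simp: swp_def)
  finally show "Hs T n g y i j = Hs T n g y j i" unfolding Hs_def .
qed

lemma Vol_1: "Vol (Suc 0) n g z = (\<Sum>l<n. z 0 l)"
  by (subst Vol_peel) (simp add: Vol_0)

lemma Hs_2:
  assumes "i < n" "j < n"
  shows "Hs 2 n g y i j = g j i"
proof -
  have "Hs 2 n g y i j = Vol (Suc (Suc 0)) n g (((\<lambda>_. y)(0 := ev j))(Suc 0 := ev i))"
    unfolding Hs_def by (simp add: numeral_2_eq_2)
  also have "\<dots> = Vol (Suc 0) n g (\<lambda>u m. g m i * ((\<lambda>_. y)(0 := ev j)) u m)"
    by (rule Vol_peel_unit[OF assms(1)])
  also have "\<dots> = (\<Sum>l<n. g l i * ev j l)" by (simp add: Vol_1)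
  also have "\<dots> = g j i" using assms(2) unfolding ev_def
    by (simp add: if_distrib[of "\<lambda>z. _ * z"] sum.delta cong: if_cong)
  finally show ?thesis .
qed

lemma hyp_congr:
  assumes "hyp n B" "c \<ge> 0"
  shows "hyp n (\<lambda>j k. c * (d j * B j k * d k))"
proof -
  have e: "bf n (\<lambda>j k. c * (d j * B j k * d k)) x v = c * bf n B (\<lambda>j. d j * x j) (\<lambda>j. d j * v j)" for x v
    unfolding bf_def by (simp add: sum_distrib_left algebra_simps)
  show ?thesis unfolding hyp_def e
  proof (intro allI impI)
    fix x v assume pos: "0 < c * bf n B (\<lambda>j. d j * x j) (\<lambda>j. d j * x j)"
    hence "c > 0" "bf n B (\<lambda>j. d j * x j) (\<lambda>j. d j * x j) > 0" using assms(2)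
      by (auto simp: zero_less_mult_iff)
    hence "(bf n B (\<lambda>j. d j * x j) (\<lambda>j. d j * v j))\<^sup>2 \<ge>
        bf n B (\<lambda>j. d j * x j) (\<lambda>j. d j * x j) * bf n B (\<lambda>j. d j * v j) (\<lambda>j. d j * v j)"
      using assms(1) unfolding hyp_def by blast
    thus "c * bf n B (\<lambda>j. d j * x j) (\<lambda>j. d j * x j) * (c * bf n B (\<lambda>j. d j * v j) (\<lambda>j. d j * v j))
        \<le> (c * bf n B (\<lambda>j. d j * x j) (\<lambda>j. d j * v j))\<^sup>2"
      using \<open>c > 0\<close> by (simp add: power2_eq_square algebra_simps mult_left_mono)
  qed
qed

lemma hyp_ext:
  assumes "hyp n B" "\<And>i j. i < n \<Longrightarrow> j < n \<Longrightarrow> B i j = B' i j"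
  shows "hyp n B'"
proof -
  have "bf n B x v = bf n B' x v" for x v unfolding bf_def using assms(2) by auto
  thus ?thesis using assms(1) unfolding hyp_def by simp
qed

lemma not_hyp_of_pos2:
  assumes sym: "symm n B"
    and pos: "\<And>a b. (a, b) \<noteq> (0, 0) \<Longrightarrow> bf n B (\<lambda>i. a * p i + b * q i) (\<lambda>i. a * p i + b * q i) > 0"
  shows "\<not> hyp n B"
proof
  assume h: "hyp n B"
  have pp: "bf n B p p > 0" using pos[of 1 0] by simp
  have ex: "bf n B (\<lambda>i. a * p i + b * q i) (\<lambda>i. a * p i + b * q i)
      = a^2 * bf n B p p + 2 * a * b * bf n B p q + b^2 * bf n B q q" for a b
    unfolding bf_add_left bf_add_right bf_scale_left bf_scale_right
    using bf_sym[OF sym, of q p] by (simp add: power2_eq_square algebra_simps)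
  have cs: "(bf n B p q)\<^sup>2 \<ge> bf n B p p * bf n B q q" using h pp unfolding hyp_def by blast
  define l where "l = bf n B p q / bf n B p p"
  have "bf n B (\<lambda>i. (- l) * p i + 1 * q i) (\<lambda>i. (- l) * p i + 1 * q i) > 0" using pos[of "-l" 1] by simp
  hence "l^2 * bf n B p p - 2 * l * bf n B p q + bf n B q q > 0" unfolding ex by simp
  moreover have "l^2 * bf n B p p - 2 * l * bf n B p q + bf n B q q = bf n B q q - (bf n B p q)^2 / bf n B p p"
    unfolding l_def using pp by (simp add: power2_eq_square field_simps)
  moreover have "(bf n B p q)^2 / bf n B p p \<ge> bf n B q q" using cs pp by (simp add: field_simps)
  ultimately show False by linarith
qed

lemma bf_perturb:
  assumes "\<And>i j. i < n \<Longrightarrow> j < n \<Longrightarrow> \<bar>B i j - B' i j\<bar> \<le> e"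
  shows "\<bar>bf n B w w - bf n B' w w\<bar> \<le> e * real n * (\<Sum>i<n. (w i)\<^sup>2)"
proof -
  have e0: "e \<ge> 0" if "n > 0" using assms[of 0 0] that by (meson abs_ge_zero order.trans)
  have "\<bar>bf n B w w - bf n B' w w\<bar> = \<bar>\<Sum>i<n. \<Sum>j<n. w i * (B i j - B' i j) * w j\<bar>"
    unfolding bf_def by (simp add: sum_subtractf algebra_simps)
  also have "\<dots> \<le> (\<Sum>i<n. \<Sum>j<n. \<bar>w i * (B i j - B' i j) * w j\<bar>)"
    by (rule order.trans[OF sum_abs sum_mono]) (rule sum_abs)
  also have "\<dots> \<le> (\<Sum>i<n. \<Sum>j<n. e * (((w i)\<^sup>2 + (w j)\<^sup>2) / 2))"
  proof (intro sum_mono)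
    fix i j assume ij: "i \<in> {..<n}" "j \<in> {..<n}"
    have "\<bar>w i * (B i j - B' i j) * w j\<bar> = \<bar>B i j - B' i j\<bar> * (\<bar>w i\<bar> * \<bar>w j\<bar>)"
      by (simp add: abs_mult)
    also have "\<dots> \<le> e * (\<bar>w i\<bar> * \<bar>w j\<bar>)" using assms ij by (intro mult_right_mono) auto
    also have "\<bar>w i\<bar> * \<bar>w j\<bar> \<le> ((w i)\<^sup>2 + (w j)\<^sup>2) / 2"
    proof -
      have "0 \<le> (\<bar>w i\<bar> - \<bar>w j\<bar>)\<^sup>2" by simp
      thus ?thesis by (simp add: power2_eq_square algebra_simps)
    qed
    hence "e * (\<bar>w i\<bar> * \<bar>w j\<bar>) \<le> e * (((w i)\<^sup>2 + (w j)\<^sup>2) / 2)"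
      using e0 ij by (intro mult_left_mono) auto
    finally show "\<bar>w i * (B i j - B' i j) * w j\<bar> \<le> e * (((w i)\<^sup>2 + (w j)\<^sup>2) / 2)" .
  qed
  also have "\<dots> = e * real n * (\<Sum>i<n. (w i)\<^sup>2)"
  proof -
    have "(\<Sum>i<n. \<Sum>j<n. e * (((w i)\<^sup>2 + (w j)\<^sup>2) / 2))
        = e / 2 * ((\<Sum>i<n. \<Sum>j<n. (w i)\<^sup>2) + (\<Sum>i<n. \<Sum>j<n. (w j)\<^sup>2))"
      by (simp add: sum_distrib_left sum.distrib algebra_simps add_divide_distrib)
    also have "(\<Sum>i<n. \<Sum>j<n. (w i)\<^sup>2) = real n * (\<Sum>i<n. (w i)\<^sup>2)"
      by (simp add: sum_distrib_left)
    also have "(\<Sum>i<n. \<Sum>j<n. (w j)\<^sup>2) = real n * (\<Sum>i<n. (w i)\<^sup>2)"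
      by simp
    finally show ?thesis by simp
  qed
  finally show ?thesis .
qed

lemma bf_cong: "(\<And>i. i < n \<Longrightarrow> x i = x' i) \<Longrightarrow> (\<And>i. i < n \<Longrightarrow> w i = w' i) \<Longrightarrow> bf n B x w = bf n B x' w'"
  unfolding bf_def by auto

lemma two_elems:
  assumes "finite K" "\<not> card K \<le> 1"
  obtains a b where "a \<in> K" "b \<in> K" "a \<noteq> b"
proof -
  from assms have "K \<noteq> {}" by auto
  then obtain a where a: "a \<in> K" by blast
  have "K - {a} \<noteq> {}"
  proof
    assume "K - {a} = {}"
    hence "K = {a}" using a by auto
    thus False using assms by simp
  qed
  then obtain b where "b \<in> K" "b \<noteq> a" by blast
  thus ?thesis using a that by blast
qed

lemma quant_pos:
  fixes H :: "nat \<Rightarrow> nat \<Rightarrow> real" and D :: "nat \<Rightarrow> real"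
  assumes sym: "symm n H" and S: "S \<subseteq> {..<n}"
    and Dge: "\<And>i. i \<in> S \<Longrightarrow> D i \<ge> \<delta>" and \<delta>: "\<delta> > 0"
    and zero: "\<And>i j. i < n \<Longrightarrow> j < n \<Longrightarrow> i \<notin> S \<or> j \<notin> S \<Longrightarrow> H i j = 0"
    and gap: "\<And>v. bf n H v v \<le> (\<Sum>i\<in>S. (\<Sum>j<n. H i j * v j)\<^sup>2 / D i)"
  shows "hyp n H \<or> (\<exists>p q. (\<forall>a b. bf n H (\<lambda>i. a * p i + b * q i) (\<lambda>i. a * p i + b * q i)
              \<ge> \<delta> * (\<Sum>i<n. (a * p i + b * q i)\<^sup>2))
          \<and> (\<forall>a b. (\<forall>i<n. a * p i + b * q i = 0) \<longrightarrow> a = 0 \<and> b = 0))"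
proof -
  define sD where "sD i = sqrt (D i)" for i
  have Dpos: "D i > 0" if "i \<in> S" for i using Dge[OF that] \<delta> by linarith
  have sDpos: "sD i > 0" if "i \<in> S" for i using Dpos[OF that] unfolding sD_def by simp
  have sD2: "sD i * sD i = D i" if "i \<in> S" for i using Dpos[OF that] unfolding sD_def by simp
  define M where "M j k = (if j \<in> S \<and> k \<in> S then H j k / (sD j * sD k) else 0)" for j k
  have Msym: "symm n M" using sym unfolding symm_def M_def by (auto simp: mult.commute)
  define tr where "tr x j = (if j \<in> S then sD j * x j else 0)" for x :: "nat \<Rightarrow> real" and j
  have T1: "bf n M (tr x) (tr w) = bf n H x w" for x w
    unfolding bf_def
  proof (intro sum.cong refl)
    fix j k assume j: "j \<in> {..<n}" and k: "k \<in> {..<n}"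
    show "tr x j * M j k * tr w k = x j * H j k * w k"
    proof (cases "j \<in> S \<and> k \<in> S")
      case True
      thus ?thesis unfolding tr_def M_def using sDpos[of j] sDpos[of k] by (simp add: field_simps)
    next
      case False
      thus ?thesis unfolding tr_def M_def using zero[of j k] j k by auto
    qed
  qed
  have Mzero: "M j k = 0" if "j \<notin> S \<or> k \<notin> S" for j k using that unfolding M_def by auto
  have T2: "bf n M u u \<le> (\<Sum>j<n. (\<Sum>k<n. M j k * u k)\<^sup>2)" for u
  proof -
    define v where "v k = (if k \<in> S then u k / sD k else 0)" for k
    have "bf n M u u = bf n M (tr v) (tr v)"
      unfolding bf_def
    proof (intro sum.cong refl)
      fix j k assume "j \<in> {..<n}" "k \<in> {..<n}"
      show "u j * M j k * u k = tr v j * M j k * tr v k"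
        unfolding tr_def v_def using sDpos[of j] sDpos[of k] Mzero[of j k] by (cases "j \<in> S \<and> k \<in> S") auto
    qed
    also have "\<dots> = bf n H v v" by (rule T1)
    also have "\<dots> \<le> (\<Sum>i\<in>S. (\<Sum>j<n. H i j * v j)\<^sup>2 / D i)" by (rule gap)
    also have "\<dots> = (\<Sum>i\<in>S. (\<Sum>j<n. M i j * u j)\<^sup>2)"
    proof (intro sum.cong refl)
      fix i assume i: "i \<in> S"
      have "(\<Sum>j<n. H i j * v j) = sD i * (\<Sum>j<n. M i j * u j)"
        unfolding sum_distrib_left
      proof (intro sum.cong refl)
        fix j assume "j \<in> {..<n}"
        show "H i j * v j = sD i * (M i j * u j)"
          unfolding v_def M_def using i sDpos[of i] sDpos[of j] by (auto simp: field_simps)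
      qed
      hence "(\<Sum>j<n. H i j * v j)\<^sup>2 / D i = (sD i * sD i) * (\<Sum>j<n. M i j * u j)\<^sup>2 / D i"
        by (simp add: power2_eq_square algebra_simps)
      also have "\<dots> = (\<Sum>j<n. M i j * u j)\<^sup>2" using sD2[OF i] Dpos[OF i] by simp
      finally show "(\<Sum>j<n. H i j * v j)\<^sup>2 / D i = (\<Sum>j<n. M i j * u j)\<^sup>2" .
    qed
    also have "\<dots> \<le> (\<Sum>j<n. (\<Sum>k<n. M j k * u k)\<^sup>2)"
      by (rule sum_mono2) (use S in auto)
    finally show ?thesis .
  qed
  from spectral[OF Msym] obtain u \<mu> where on: "orthonormal n u" and co: "complete n u"
    and dec: "\<forall>i<n. \<forall>j<n. M i j = (\<Sum>k<n. \<mu> k * u k i * u k j)" by blast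
  have onk: "(\<Sum>i<n. u l i * u k i) = (if l = k then 1 else 0)" if "l < n" "k < n" for l k
    using on that unfolding orthonormal_def by auto
  have Mu: "(\<Sum>i<n. M j i * u k i) = \<mu> k * u k j" if j: "j < n" and k: "k < n" for j k
  proof -
    have "(\<Sum>i<n. M j i * u k i) = (\<Sum>i<n. \<Sum>l<n. \<mu> l * u l j * (u l i * u k i))"
      using dec j by (intro sum.cong refl) (auto simp: sum_distrib_right sum_distrib_left algebra_simps)
    also have "\<dots> = (\<Sum>l<n. \<mu> l * u l j * (\<Sum>i<n. u l i * u k i))"
      by (subst sum.swap) (simp add: sum_distrib_left)
    also have "\<dots> = (\<Sum>l<n. \<mu> l * u l j * (if l = k then 1 else 0))"
      using onk k by (intro sum.cong refl) auto
    also have "\<dots> = \<mu> k * u k j" by (rule sum_delta_right[OF k])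
    finally show ?thesis .
  qed
  have bfu: "bf n M (u k) (u k) = \<mu> k" if k: "k < n" for k
  proof -
    have "bf n M (u k) (u k) = (\<Sum>l<n. \<mu> l * (\<Sum>i<n. u l i * u k i) * (\<Sum>j<n. u l j * u k j))"
      by (rule bf_spectral[OF dec])
    also have "\<dots> = (\<Sum>l<n. \<mu> l * (if l = k then 1 else 0))"
      using onk k by (intro sum.cong refl) auto
    also have "\<dots> = \<mu> k" by (rule sum_delta_right[OF k])
    finally show ?thesis .
  qed
  have ge1: "\<mu> k \<ge> 1" if k: "k < n" and pos: "\<mu> k > 0" for k
  proof -
    have "\<mu> k \<le> (\<Sum>j<n. (\<Sum>i<n. M j i * u k i)\<^sup>2)" using T2[of "u k"] bfu[OF k] by simp
    also have "\<dots> = (\<Sum>j<n. (\<mu> k * u k j)\<^sup>2)" using Mu k by (intro sum.cong refl) auto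
    also have "\<dots> = \<mu> k * \<mu> k * (\<Sum>j<n. u k j * u k j)"
      by (simp add: power2_eq_square sum_distrib_left algebra_simps)
    also have "\<dots> = \<mu> k * \<mu> k" using onk[OF k k] by simp
    finally have "\<mu> k * 1 \<le> \<mu> k * \<mu> k" by simp
    thus ?thesis using pos by (simp add: mult_le_cancel_left)
  qed
  show ?thesis
  proof (cases "card {k. k < n \<and> \<mu> k > 0} \<le> 1")
    case True
    have "hyp n M" by (rule hyp_of_spectral[OF Msym dec True])
    hence "hyp n H" unfolding hyp_def T1[symmetric] by blast
    thus ?thesis ..
  next
    case False
    obtain k1 k2 where k1: "k1 < n" "\<mu> k1 > 0" and k2: "k2 < n" "\<mu> k2 > 0" and kk: "k1 \<noteq> k2"
      using two_elems[OF _ False] by (metis (no_types, lifting) finite_nat_set_iff_bounded mem_Collect_eq)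
    have supp: "u k j = 0" if "k < n" "\<mu> k > 0" "j < n" "j \<notin> S" for k j
    proof -
      have "\<mu> k * u k j = (\<Sum>i<n. M j i * u k i)" using Mu that by simp
      also have "\<dots> = 0" using Mzero that by simp
      finally show ?thesis using that by simp
    qed
    define p where "p j = (if j \<in> S then u k1 j / sD j else 0)" for j
    define q where "q j = (if j \<in> S then u k2 j / sD j else 0)" for j
    have trw: "tr (\<lambda>i. a * p i + b * q i) j = a * u k1 j + b * u k2 j" if j: "j < n" for a b j
      unfolding tr_def p_def q_def using sDpos[of j] supp[OF k1 j] supp[OF k2 j]
      by (cases "j \<in> S") (auto simp: field_simps)
    have zz: "(\<Sum>i<n. (a * u k1 i + b * u k2 i)\<^sup>2) = a^2 + b^2" for a b
    proof -
      have "(\<Sum>i<n. (a * u k1 i + b * u k2 i)\<^sup>2) = a^2 * (\<Sum>i<n. u k1 i * u k1 i)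
          + 2 * a * b * (\<Sum>i<n. u k1 i * u k2 i) + b^2 * (\<Sum>i<n. u k2 i * u k2 i)"
        by (simp add: power2_eq_square sum_distrib_left sum.distrib algebra_simps)
      thus ?thesis using onk[OF k1(1) k1(1)] onk[OF k1(1) k2(1)] onk[OF k2(1) k2(1)] kk by simp
    qed
    have bfz: "bf n M (\<lambda>i. a * u k1 i + b * u k2 i) (\<lambda>i. a * u k1 i + b * u k2 i) = \<mu> k1 * a^2 + \<mu> k2 * b^2" for a b
    proof -
      have "bf n M (\<lambda>i. a * u k1 i + b * u k2 i) (\<lambda>i. a * u k1 i + b * u k2 i)
          = (\<Sum>l<n. \<mu> l * (\<Sum>i<n. u l i * (a * u k1 i + b * u k2 i)) * (\<Sum>j<n. u l j * (a * u k1 j + b * u k2 j)))"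
        by (rule bf_spectral[OF dec])
      also have "\<dots> = (\<Sum>l<n. \<mu> l * (a * (if l = k1 then 1 else 0) + b * (if l = k2 then 1 else 0))^2)"
      proof (intro sum.cong refl)
        fix l assume l: "l \<in> {..<n}"
        have "(\<Sum>i<n. u l i * (a * u k1 i + b * u k2 i)) = a * (\<Sum>i<n. u l i * u k1 i) + b * (\<Sum>i<n. u l i * u k2 i)"
          by (simp add: sum_distrib_left sum.distrib algebra_simps)
        also have "\<dots> = a * (if l = k1 then 1 else 0) + b * (if l = k2 then 1 else 0)"
          using onk[of l k1] onk[of l k2] l k1 k2 by simp
        finally show "\<mu> l * (\<Sum>i<n. u l i * (a * u k1 i + b * u k2 i)) * (\<Sum>j<n. u l j * (a * u k1 j + b * u k2 j))
            = \<mu> l * (a * (if l = k1 then 1 else 0) + b * (if l = k2 then 1 else 0))^2"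
          by (simp add: power2_eq_square)
      qed
      also have "\<dots> = (\<Sum>l<n. a^2 * (\<mu> l * (if l = k1 then 1 else 0)) + b^2 * (\<mu> l * (if l = k2 then 1 else 0)))"
        using kk by (intro sum.cong refl) (auto simp: power2_eq_square)
      also have "\<dots> = a^2 * \<mu> k1 + b^2 * \<mu> k2"
        by (simp add: sum.distrib sum_distrib_left[symmetric] sum_delta_right[OF k1(1)] sum_delta_right[OF k2(1)])
      finally show ?thesis by simp
    qed
    have "\<forall>a b. bf n H (\<lambda>i. a * p i + b * q i) (\<lambda>i. a * p i + b * q i) \<ge> \<delta> * (\<Sum>i<n. (a * p i + b * q i)\<^sup>2)"
    proof (intro allI)
      fix a b
      let ?w = "\<lambda>i. a * p i + b * q i"
      have "bf n H ?w ?w = bf n M (tr ?w) (tr ?w)" by (rule T1[symmetric])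
      also have "\<dots> = \<mu> k1 * a^2 + \<mu> k2 * b^2" unfolding bfz[symmetric] by (rule bf_cong) (auto simp: trw)
      finally have e1: "bf n H ?w ?w = \<mu> k1 * a^2 + \<mu> k2 * b^2" .
      have "\<mu> k1 * a^2 \<ge> 1 * a^2" using ge1[OF k1] by (intro mult_right_mono) auto
      moreover have "\<mu> k2 * b^2 \<ge> 1 * b^2" using ge1[OF k2] by (intro mult_right_mono) auto
      ultimately have "\<mu> k1 * a^2 \<ge> a^2" "\<mu> k2 * b^2 \<ge> b^2" by auto
      hence e2: "bf n H ?w ?w \<ge> a^2 + b^2" using e1 by linarith
      have "\<delta> * (\<Sum>i<n. (?w i)\<^sup>2) \<le> (\<Sum>i<n. (a * u k1 i + b * u k2 i)\<^sup>2)"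
        unfolding sum_distrib_left
      proof (intro sum_mono)
        fix i assume i: "i \<in> {..<n}"
        show "\<delta> * (?w i)\<^sup>2 \<le> (a * u k1 i + b * u k2 i)\<^sup>2"
        proof (cases "i \<in> S")
          case True
          have eq: "a * u k1 i + b * u k2 i = sD i * ?w i"
            using trw[of i a b] i True unfolding tr_def by simp
          have "(a * u k1 i + b * u k2 i)\<^sup>2 = (sD i * sD i) * (?w i)\<^sup>2"
            unfolding eq by (simp add: power2_eq_square algebra_simps)
          hence "(a * u k1 i + b * u k2 i)\<^sup>2 = D i * (?w i)\<^sup>2" using sD2[OF True] by simp
          moreover have "\<delta> * (?w i)\<^sup>2 \<le> D i * (?w i)\<^sup>2" using Dge[OF True] by (intro mult_right_mono) auto
          ultimately show ?thesis by simp
        next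
          case False thus ?thesis unfolding p_def q_def by simp
        qed
      qed
      thus "\<delta> * (\<Sum>i<n. (?w i)\<^sup>2) \<le> bf n H ?w ?w" using e2 zz[of a b] by linarith
    qed
    moreover have "\<forall>a b. (\<forall>i<n. a * p i + b * q i = 0) \<longrightarrow> a = 0 \<and> b = 0"
    proof (intro allI impI)
      fix a b assume h: "\<forall>i<n. a * p i + b * q i = 0"
      have "(\<Sum>i<n. (a * u k1 i + b * u k2 i)\<^sup>2) = 0"
      proof (intro sum.neutral ballI)
        fix i assume i: "i \<in> {..<n}"
        have "a * u k1 i + b * u k2 i = tr (\<lambda>i. a * p i + b * q i) i" using trw i by simp
        also have "\<dots> = 0" unfolding tr_def using h i by simp
        finally show "(a * u k1 i + b * u k2 i)\<^sup>2 = 0" by simp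
      qed
      hence "a^2 + b^2 = 0" using zz by simp
      thus "a = 0 \<and> b = 0" by (simp add: sum_power2_eq_zero_iff)
    qed
    ultimately show ?thesis by blast
  qed
qed

lemma prod_two_points:
  fixes a b t :: nat
  assumes "a < t" "b < t" "a \<noteq> b"
  shows "(\<Prod>u<t. (if u = a then \<alpha> else if u = b then \<beta> else 1)) = (\<alpha> * \<beta> :: real)"
proof -
  have "(\<Prod>u<t. (if u = a then \<alpha> else if u = b then \<beta> else 1))
      = (\<Prod>u<t. (if u = a then \<alpha> else 1) * (if u = b then \<beta> else 1))"
    using assms by (intro prod.cong) auto
  also have "\<dots> = \<alpha> * \<beta>" using assms by (simp add: prod.distrib prod.delta)
  finally show ?thesis .
qed

lemma prod_one_point:
  fixes a t :: nat
  assumes "a < t"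
  shows "(\<Prod>u<t. (if u = a then \<alpha> else 1)) = (\<alpha> :: real)"
  using assms by (simp add: prod.delta)

definition Kf :: "nat \<Rightarrow> nat \<Rightarrow> (nat \<Rightarrow> nat \<Rightarrow> real) \<Rightarrow> (nat \<Rightarrow> real) \<Rightarrow> nat \<Rightarrow> nat \<Rightarrow> nat \<Rightarrow> real" where
  "Kf t n g y i j k = Vol (Suc t) n g (((\<lambda>_. y)(t := ev i))(t - 2 := ev k, t - 1 := ev j))"

lemma K_rel:
  assumes t: "t \<ge> 2" and i: "i < n" and j: "j < n" and k: "k < n"
  shows "Kf t n g y i j k = g j i * g k i * Hs t n g (\<lambda>m. g m i * y m) j k"
proof -
  have "Kf t n g y i j k = Vol (Suc t) n g (((\<lambda>_. y)(t - 2 := ev k, t - 1 := ev j))(t := ev i))"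
    unfolding Kf_def using t by (simp add: fun_upd_twist)
  also have "\<dots> = Vol t n g (\<lambda>u m. g m i * ((\<lambda>_. y)(t - 2 := ev k, t - 1 := ev j)) u m)"
    by (rule Vol_peel_unit[OF i])
  also have "\<dots> = Vol t n g (\<lambda>u m. (if u = t - 2 then g k i else if u = t - 1 then g j i else 1)
        * ((\<lambda>_. (\<lambda>m. g m i * y m))(t - 2 := ev k, t - 1 := ev j)) u m)"
    using t by (intro Vol_cong) (auto simp: ev_def)
  also have "\<dots> = g k i * g j i * Hs t n g (\<lambda>m. g m i * y m) j k"
    unfolding Vol_scale Hs_def using t by (subst prod_two_points) auto
  finally show ?thesis by simp
qed

lemma Hs_peel:
  assumes t: "t \<ge> 1" and i: "i < n" and j: "j < n"
  shows "Hs (Suc t) n g y i j = g j i * Vol t n g ((\<lambda>_. (\<lambda>m. g m i * y m))(t - 1 := ev j))"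
proof -
  have "Hs (Suc t) n g y i j = Vol (Suc t) n g (((\<lambda>_. y)(t - 1 := ev j))(t := ev i))"
    unfolding Hs_def using t by simp
  also have "\<dots> = Vol t n g (\<lambda>u m. g m i * ((\<lambda>_. y)(t - 1 := ev j)) u m)"
    by (rule Vol_peel_unit[OF i])
  also have "\<dots> = Vol t n g (\<lambda>u m. (if u = t - 1 then g j i else 1)
        * ((\<lambda>_. (\<lambda>m. g m i * y m))(t - 1 := ev j)) u m)"
    using t by (intro Vol_cong) (auto simp: ev_def)
  also have "\<dots> = g j i * Vol t n g ((\<lambda>_. (\<lambda>m. g m i * y m))(t - 1 := ev j))"
    unfolding Vol_scale using t by (subst prod_one_point) auto
  finally show ?thesis .
qed

lemma Hv_eq:
  assumes t: "t \<ge> 1"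
  shows "(\<Sum>j<n. Hs (Suc t) n g y i j * v j) = Vol (Suc t) n g ((\<lambda>_. y)(t - 1 := v, t := ev i))"
proof -
  have "(\<Sum>j<n. Hs (Suc t) n g y i j * v j) = (\<Sum>j<n. v j * Vol (Suc t) n g (((\<lambda>_. y)(t := ev i))(t - 1 := ev j)))"
    unfolding Hs_def using t by (intro sum.cong refl) (simp add: fun_upd_twist mult.commute)
  also have "\<dots> = Vol (Suc t) n g (((\<lambda>_. y)(t := ev i))(t - 1 := v))"
    using Vol_slot_unit[of "t - 1" "Suc t" n g "(\<lambda>_. y)(t := ev i)" v] t by simp
  finally show ?thesis using t by (simp add: fun_upd_twist)
qed

lemma Hy_eq:
  assumes t: "t \<ge> 1"
  shows "(\<Sum>j<n. Hs (Suc t) n g y i j * y j) = Vol (Suc t) n g ((\<lambda>_. y)(t := ev i))"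
proof -
  have "(\<lambda>_. y)(t - 1 := y, t := ev i) = (\<lambda>_. y)(t := ev i)" by auto
  thus ?thesis using Hv_eq[OF t, of n g y i y] by simp
qed

lemma bfH_decomp:
  assumes t: "t \<ge> 2" and sym: "symm n g"
  shows "bf n (Hs (Suc t) n g y) v v = (\<Sum>i<n. y i * bf n (Kf t n g y i) v v)"
proof -
  have "bf n (Hs (Suc t) n g y) v v = Vol (Suc t) n g ((\<lambda>_. y)(Suc t - 2 := v, Suc t - 1 := v))"
    by (rule Hs_bf) (use t in auto)
  also have "(\<lambda>_. y)(Suc t - 2 := v, Suc t - 1 := v) = ((\<lambda>_. y)(t - 1 := v, t := v))(t - 2 := y)"
    using t by (intro ext) auto
  also have "Vol (Suc t) n g \<dots> = (\<Sum>i<n. y i * Vol (Suc t) n g (((\<lambda>_. y)(t - 1 := v, t := v))(t - 2 := ev i)))"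
    by (rule Vol_slot_unit) (use t in auto)
  also have "\<dots> = (\<Sum>i<n. y i * bf n (Kf t n g y i) v v)"
  proof (intro sum.cong refl arg_cong2[where f="(*)"])
    fix i
    let ?Z = "((\<lambda>_. y)(t - 1 := v, t := v))(t - 2 := ev i)"
    have "Vol (Suc t) n g ?Z = Vol (Suc t) n g (\<lambda>u. ?Z (swp (t - 2) t u))"
      by (rule Vol_swap[OF sym, symmetric]) (use t in auto)
    also have "(\<lambda>u. ?Z (swp (t - 2) t u)) = ((\<lambda>_. y)(t := ev i))(t - 2 := v, t - 1 := v)"
      using t by (intro ext) (auto simp: swp_def)
    also have "Vol (Suc t) n g \<dots> = bf n (Kf t n g y i) v v"
      unfolding Kf_def by (rule bf_two_slots[symmetric]) (use t in auto)
    finally show "Vol (Suc t) n g ?Z = bf n (Kf t n g y i) v v" .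
  qed
  finally show ?thesis .
qed

lemma bfK_vy:
  assumes t: "t \<ge> 2"
  shows "bf n (Kf t n g y i) v y = (\<Sum>j<n. Hs (Suc t) n g y i j * v j)"
proof -
  have "bf n (Kf t n g y i) v y = Vol (Suc t) n g (((\<lambda>_. y)(t := ev i))(t - 2 := y, t - 1 := v))"
    unfolding Kf_def by (rule bf_two_slots) (use t in auto)
  also have "((\<lambda>_. y)(t := ev i))(t - 2 := y, t - 1 := v) = (\<lambda>_. y)(t - 1 := v, t := ev i)"
    using t by (intro ext) auto
  finally have c: "bf n (Kf t n g y i) v y = Vol (Suc t) n g ((\<lambda>_. y)(t - 1 := v, t := ev i))" .
  have t1: "t \<ge> 1" using t by simp
  show ?thesis unfolding Hv_eq[OF t1] by (rule c)
qed

definition good :: "nat \<Rightarrow> (nat \<Rightarrow> nat \<Rightarrow> real) \<Rightarrow> nat set \<Rightarrow> bool" where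
  "good n g S \<longleftrightarrow> S \<subseteq> {..<n} \<and> symm n g \<and>
     (\<forall>i<n. \<forall>j<n. (i \<in> S \<and> j \<in> S \<longrightarrow> g i j > 0) \<and> (i \<notin> S \<or> j \<notin> S \<longrightarrow> g i j = 0))"

lemma good_gnn: "good n g S \<Longrightarrow> gnn n g"
  unfolding good_def gnn_def by (metis less_le order_refl)

lemma good_zero: "good n g S \<Longrightarrow> i < n \<Longrightarrow> j < n \<Longrightarrow> i \<notin> S \<or> j \<notin> S \<Longrightarrow> g i j = 0"
  unfolding good_def by blast

lemma good_pos: "good n g S \<Longrightarrow> i \<in> S \<Longrightarrow> j \<in> S \<Longrightarrow> g i j > 0"
  unfolding good_def by blast

lemma Hy_pos:
  assumes gd: "good n g S" and i: "i \<in> S" and y0: "\<forall>j<n. y j \<ge> 0" and ypos: "y i > 0"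
  shows "Vol (Suc t) n g ((\<lambda>_. y)(t := ev i)) > 0"
proof -
  have iS: "i < n" using gd i unfolding good_def by auto
  show ?thesis
  proof (rule Vol_pos[of n g "Suc t" "(\<lambda>_. y)(t := ev i)" "restrict (\<lambda>_. i) {0..<Suc t}"])
    show "gnn n g" using good_gnn[OF gd] .
    show "xnn (Suc t) n ((\<lambda>_. y)(t := ev i))" using y0 unfolding xnn_def by (auto simp: ev_def)
    show "restrict (\<lambda>_. i) {0..<Suc t} \<in> {0..<Suc t} \<rightarrow>\<^sub>E {0..<n}" using iS by auto
    fix u v assume "(u, v) \<in> Ed (Suc t)"
    hence "u < Suc t" "v < Suc t" unfolding Ed_def by auto
    thus "g (restrict (\<lambda>_. i) {0..<Suc t} u) (restrict (\<lambda>_. i) {0..<Suc t} v) > 0"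
      using good_pos[OF gd i i] by auto
  next
    fix u assume "u < Suc t"
    thus "((\<lambda>_. y)(t := ev i)) u (restrict (\<lambda>_. i) {0..<Suc t} u) > 0"
      using ypos by (auto simp: ev_def)
  qed
qed

lemma gap_lemma:
  assumes t: "t \<ge> 2" and gd: "good n g S"
    and IH: "\<And>y'. \<forall>j<n. y' j \<ge> 0 \<Longrightarrow> hyp n (Hs t n g y')"
    and y0: "\<forall>j<n. y j \<ge> 0" and ypos: "\<forall>j\<in>S. y j > 0"
  shows "bf n (Hs (Suc t) n g y) v v
     \<le> (\<Sum>i\<in>S. (\<Sum>j<n. Hs (Suc t) n g y i j * v j)\<^sup>2 / ((\<Sum>j<n. Hs (Suc t) n g y i j * y j) / y i))"
proof -
  have sym: "symm n g" and Sn: "S \<subseteq> {..<n}" using gd unfolding good_def by auto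
  have t1: "t \<ge> 1" using t by simp
  let ?H = "Hs (Suc t) n g y"
  have "bf n ?H v v = (\<Sum>i<n. y i * bf n (Kf t n g y i) v v)" by (rule bfH_decomp[OF t sym])
  also have "\<dots> = (\<Sum>i\<in>S. y i * bf n (Kf t n g y i) v v)"
  proof (rule sum.mono_neutral_right)
    show "S \<subseteq> {..<n}" by (rule Sn)
    show "\<forall>i\<in>{..<n} - S. y i * bf n (Kf t n g y i) v v = 0"
    proof
      fix i assume i: "i \<in> {..<n} - S"
      have "Kf t n g y i j k = 0" if "j < n" "k < n" for j k
        using K_rel[OF t _ that, of i g y] i good_zero[OF gd that(1), of i] by auto
      hence "bf n (Kf t n g y i) v v = 0" unfolding bf_def by simp
      thus "y i * bf n (Kf t n g y i) v v = 0" by simp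
    qed
  qed simp
  also have "\<dots> \<le> (\<Sum>i\<in>S. (\<Sum>j<n. ?H i j * v j)\<^sup>2 / ((\<Sum>j<n. ?H i j * y j) / y i))"
  proof (rule sum_mono)
    fix i assume i: "i \<in> S"
    have iS: "i < n" using i Sn by auto
    let ?y' = "\<lambda>m. g m i * y m"
    have y'0: "\<forall>j<n. ?y' j \<ge> 0" using y0 good_gnn[OF gd] iS unfolding gnn_def by auto
    have hK0: "hyp n (\<lambda>j k. 1 * (g j i * Hs t n g ?y' j k * g k i))"
      by (rule hyp_congr[OF IH[OF y'0]]) simp
    have Keq: "Kf t n g y i j k = 1 * (g j i * Hs t n g ?y' j k * g k i)" if "j < n" "k < n" for j k
      using K_rel[OF t iS that] by simp
    have hK: "hyp n (Kf t n g y i)" by (rule hyp_ext[OF hK0]) (simp add: Keq)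
    have Hsym: "symm n (Hs t n g ?y')" by (rule Hs_symm[OF sym t])
    have Ksym: "symm n (Kf t n g y i)" using Hsym unfolding symm_def by (auto simp: K_rel[OF t iS] algebra_simps)
    have Kyy: "bf n (Kf t n g y i) y y = (\<Sum>j<n. ?H i j * y j)" by (rule bfK_vy[OF t])
    have Kvy: "bf n (Kf t n g y i) y v = (\<Sum>j<n. ?H i j * v j)"
      using bfK_vy[OF t, of n g y i v] bf_sym[OF Ksym, of y v] by simp
    have Hy: "(\<Sum>j<n. ?H i j * y j) > 0"
      unfolding Hy_eq[OF t1] using Hy_pos[OF gd i y0] ypos i by auto
    have "bf n (Kf t n g y i) y y > 0" using Hy Kyy by simp
    hence "(bf n (Kf t n g y i) y v)\<^sup>2 \<ge> bf n (Kf t n g y i) y y * bf n (Kf t n g y i) v v"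
      using hK unfolding hyp_def by blast
    hence "bf n (Kf t n g y i) v v \<le> (\<Sum>j<n. ?H i j * v j)\<^sup>2 / (\<Sum>j<n. ?H i j * y j)"
      using Hy unfolding Kyy Kvy by (simp add: field_simps)
    hence "y i * bf n (Kf t n g y i) v v \<le> y i * ((\<Sum>j<n. ?H i j * v j)\<^sup>2 / (\<Sum>j<n. ?H i j * y j))"
      using ypos i by (intro mult_left_mono) auto
    also have "\<dots> = (\<Sum>j<n. ?H i j * v j)\<^sup>2 / ((\<Sum>j<n. ?H i j * y j) / y i)"
      using ypos i by (simp add: field_simps)
    finally show "y i * bf n (Kf t n g y i) v v \<le> (\<Sum>j<n. ?H i j * v j)\<^sup>2 / ((\<Sum>j<n. ?H i j * y j) / y i)" .
  qed
  finally show ?thesis .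
qed

lemma H_zero:
  assumes t: "t \<ge> 1" and gd: "good n g S" and ij: "i < n" "j < n" "i \<notin> S \<or> j \<notin> S"
  shows "Hs (Suc t) n g y i j = 0"
  unfolding Hs_peel[OF t ij(1,2)] using good_zero[OF gd ij(2,1)] ij(3) by auto

lemma interval_conn:
  fixes P :: "real \<Rightarrow> bool"
  assumes P0: "P 0"
    and op1: "\<And>s0. 0 \<le> s0 \<Longrightarrow> s0 \<le> 1 \<Longrightarrow> P s0 \<Longrightarrow> \<exists>\<eta>>0. \<forall>s. 0 < s \<and> s \<le> 1 \<and> \<bar>s - s0\<bar> < \<eta> \<longrightarrow> P s"
    and op2: "\<And>s0. 0 \<le> s0 \<Longrightarrow> s0 \<le> 1 \<Longrightarrow> \<not> P s0 \<Longrightarrow> \<exists>\<eta>>0. \<forall>s. \<bar>s - s0\<bar> < \<eta> \<longrightarrow> \<not> P s"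
  shows "P 1"
proof (rule ccontr)
  assume n1: "\<not> P 1"
  define F where "F = {s. 0 \<le> s \<and> s \<le> 1 \<and> \<not> P s}"
  have F1: "1 \<in> F" using n1 unfolding F_def by auto
  have bdd: "bdd_below F" unfolding F_def by (rule bdd_belowI[of _ 0]) auto
  define \<sigma> where "\<sigma> = Inf F"
  have s_le: "\<sigma> \<le> f" if "f \<in> F" for f unfolding \<sigma>_def by (rule cInf_lower[OF that bdd])
  have s0: "0 \<le> \<sigma>" unfolding \<sigma>_def by (rule cInf_greatest) (use F1 in \<open>auto simp: F_def\<close>)
  have s1: "\<sigma> \<le> 1" using s_le[OF F1] .
  have below: "P s" if "0 \<le> s" "s < \<sigma>" for s
  proof (rule ccontr)
    assume "\<not> P s"
    hence "s \<in> F" using that s1 unfolding F_def by auto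
    thus False using s_le that by fastforce
  qed
  show False
  proof (cases "P \<sigma>")
    case True
    from op1[OF s0 s1 True] obtain \<eta> where \<eta>: "\<eta> > 0" "\<forall>s. 0 < s \<and> s \<le> 1 \<and> \<bar>s - \<sigma>\<bar> < \<eta> \<longrightarrow> P s" by blast
    have "\<sigma> + \<eta> \<le> f" if f: "f \<in> F" for f
    proof (rule ccontr)
      assume "\<not> \<sigma> + \<eta> \<le> f"
      have fF: "0 \<le> f" "f \<le> 1" "\<not> P f" using f unfolding F_def by auto
      have "\<sigma> \<le> f" using s_le[OF f] .
      show False
      proof (cases "f = 0")
        case True thus False using fF P0 by simp
      next
        case False
        hence "P f" using \<eta>(2) fF \<open>\<sigma> \<le> f\<close> \<open>\<not> \<sigma> + \<eta> \<le> f\<close> by auto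
        thus False using fF by simp
      qed
    qed
    hence "\<sigma> + \<eta> \<le> \<sigma>" unfolding \<sigma>_def using F1 by (intro cInf_greatest) auto
    thus False using \<eta>(1) by simp
  next
    case False
    hence sp: "\<sigma> \<noteq> 0" using P0 by auto
    from op2[OF s0 s1 False] obtain \<eta> where \<eta>: "\<eta> > 0" "\<forall>s. \<bar>s - \<sigma>\<bar> < \<eta> \<longrightarrow> \<not> P s" by blast
    show False
    proof (cases "\<sigma> - \<eta> / 2 \<ge> 0")
      case True
      have "P (\<sigma> - \<eta> / 2)" using below True \<eta>(1) by simp
      moreover have "\<not> P (\<sigma> - \<eta> / 2)" using \<eta> by simp
      ultimately show False by simp
    next
      case False
      have "\<bar>0 - \<sigma>\<bar> < \<eta>" using False s0 \<eta>(1) by simp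
      thus False using \<eta>(2) P0 by blast
    qed
  qed
qed

lemma Vol_isCont:
  assumes "\<And>u m. isCont (\<lambda>s. X s u m) s0"
  shows "isCont (\<lambda>s::real. Vol t n g (X s)) s0"
  unfolding Vol_def isCont_def
  by (intro tendsto_sum tendsto_mult tendsto_const tendsto_prod) (use assms in \<open>auto simp: isCont_def\<close>)

lemma bf_isCont:
  assumes "\<And>i j. isCont (\<lambda>s. B s i j) s0"
  shows "isCont (\<lambda>s::real. bf n (B s) x v) s0"
  unfolding bf_def isCont_def
  by (intro tendsto_sum tendsto_mult tendsto_const) (use assms in \<open>auto simp: isCont_def\<close>)

lemma prod_except_last: "(\<Prod>u<Suc t. (if u = t then 1 else c)) = (c::real) ^ t"
  by (simp add: prod.lessThan_Suc)

lemma base_hyp: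
  assumes t: "t \<ge> 2" and sym: "symm n g" and gn: "gnn n g" and hg: "hyp n g" and i0: "i0 < n"
  shows "hyp n (Hs (Suc t) n g (ev i0))"
proof -
  obtain r where r: "t = Suc r" using t by (cases t) auto
  define C where "C = Vol r n g (\<lambda>_. ev i0)"
  have C0: "C \<ge> 0" unfolding C_def using gn by (intro Vol_nonneg) (auto simp: xnn_def ev_def)
  define d where "d k = g i0 k ^ r" for k
  have eq: "Hs (Suc t) n g (ev i0) i j = C * (d i * g i j * d j)" if ij: "i < n" "j < n" for i j
  proof -
    have "Hs (Suc t) n g (ev i0) i j = g j i * Vol t n g ((\<lambda>_. (\<lambda>m. g m i * ev i0 m))(t - 1 := ev j))"
      by (rule Hs_peel) (use t ij in auto)
    also have "Vol t n g ((\<lambda>_. (\<lambda>m. g m i * ev i0 m))(t - 1 := ev j))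
        = Vol (Suc r) n g ((\<lambda>_. (\<lambda>m. g m i * ev i0 m))(r := ev j))" using r by simp
    also have "\<dots> = Vol r n g (\<lambda>u m. g m j * (\<lambda>_. (\<lambda>m. g m i * ev i0 m)) u m)"
      by (rule Vol_peel_unit[OF ij(2)])
    also have "\<dots> = Vol r n g (\<lambda>u m. (g i0 j * g i0 i) * ev i0 m)"
      by (intro Vol_cong) (auto simp: ev_def)
    also have "\<dots> = (g i0 j * g i0 i) ^ r * C"
      unfolding C_def using Vol_scale[of r n g "\<lambda>_. g i0 j * g i0 i" "\<lambda>_. ev i0"] by simp
    finally have "Hs (Suc t) n g (ev i0) i j = g j i * ((g i0 j * g i0 i) ^ r * C)" .
    moreover have "g j i = g i j" using sym ij unfolding symm_def by auto
    ultimately show ?thesis unfolding d_def by (simp add: power_mult_distrib algebra_simps)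
  qed
  show ?thesis by (rule hyp_ext[OF hyp_congr[OF hg C0, of d]]) (simp add: eq)
qed

lemma Hy_pos2:
  assumes gd: "good n g S" and i: "i \<in> S" and k: "k \<in> S" and y0: "\<forall>j<n. y j \<ge> 0" and ypos: "y k > 0"
  shows "Vol (Suc t) n g ((\<lambda>_. y)(t := ev i)) > 0"
proof -
  have iS: "i < n" "k < n" using gd i k unfolding good_def by auto
  let ?\<phi> = "\<lambda>u. if u < t then k else if u = t then i else undefined"
  show ?thesis
  proof (rule Vol_pos[of n g "Suc t" "(\<lambda>_. y)(t := ev i)" ?\<phi>])
    show "gnn n g" using good_gnn[OF gd] .
    show "xnn (Suc t) n ((\<lambda>_. y)(t := ev i))" using y0 unfolding xnn_def by (auto simp: ev_def)
    show "?\<phi> \<in> {0..<Suc t} \<rightarrow>\<^sub>E {0..<n}" using iS by (auto simp: PiE_def extensional_def)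
    fix u v assume "(u, v) \<in> Ed (Suc t)"
    hence "u < v" "v < Suc t" unfolding Ed_def by auto
    thus "g (?\<phi> u) (?\<phi> v) > 0"
      using good_pos[OF gd k k] good_pos[OF gd k i] good_pos[OF gd i k] good_pos[OF gd i i] by auto
  next
    fix u assume "u < Suc t"
    thus "((\<lambda>_. y)(t := ev i)) u (?\<phi> u) > 0" using ypos by (auto simp: ev_def)
  qed
qed

lemma Hy_lower:
  assumes gd: "good n g S" and y0: "\<forall>j<n. y j \<ge> 0" and s: "0 \<le> s" "s \<le> 1"
  shows "Vol (Suc t) n g ((\<lambda>_. (\<lambda>j. (1 - s) * ev i0 j + s * y j))(t := ev i))
     \<ge> min (Vol (Suc t) n g ((\<lambda>_. ev i0)(t := ev i))) (Vol (Suc t) n g ((\<lambda>_. y)(t := ev i))) * (1/2) ^ t"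
proof -
  let ?A = "Vol (Suc t) n g ((\<lambda>_. ev i0)(t := ev i))"
  let ?B = "Vol (Suc t) n g ((\<lambda>_. y)(t := ev i))"
  let ?V = "Vol (Suc t) n g ((\<lambda>_. (\<lambda>j. (1 - s) * ev i0 j + s * y j))(t := ev i))"
  have gn: "gnn n g" using good_gnn[OF gd] .
  have A0: "?A \<ge> 0" using gn by (intro Vol_nonneg) (auto simp: xnn_def ev_def)
  have B0: "?B \<ge> 0" using gn y0 by (intro Vol_nonneg) (auto simp: xnn_def ev_def)
  have VA: "?V \<ge> (1 - s) ^ t * ?A"
  proof -
    have "(1 - s) ^ t * ?A = Vol (Suc t) n g (\<lambda>u j. (if u = t then 1 else 1 - s) * ((\<lambda>_. ev i0)(t := ev i)) u j)"
      unfolding Vol_scale prod_except_last ..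
    also have "\<dots> \<le> ?V"
      using gn s y0 by (intro Vol_mono) (auto simp: xnn_def ev_def)
    finally show ?thesis .
  qed
  have VB: "?V \<ge> s ^ t * ?B"
  proof -
    have "s ^ t * ?B = Vol (Suc t) n g (\<lambda>u j. (if u = t then 1 else s) * ((\<lambda>_. y)(t := ev i)) u j)"
      unfolding Vol_scale prod_except_last ..
    also have "\<dots> \<le> ?V"
      using gn s y0 by (intro Vol_mono) (auto simp: xnn_def ev_def)
    finally show ?thesis .
  qed
  show ?thesis
  proof (cases "s \<le> 1/2")
    case True
    have "(1/2) ^ t \<le> (1 - s) ^ t" using True by (intro power_mono) auto
    hence "min ?A ?B * (1/2) ^ t \<le> ?A * (1 - s) ^ t" using A0 B0 by (intro mult_mono) auto
    thus ?thesis using VA by (simp add: mult.commute)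
  next
    case False
    have "(1/2) ^ t \<le> s ^ t" using False by (intro power_mono) auto
    hence "min ?A ?B * (1/2) ^ t \<le> ?B * s ^ t" using A0 B0 by (intro mult_mono) auto
    thus ?thesis using VB by (simp add: mult.commute)
  qed
qed

lemma sumsq_pos: fixes n :: nat shows "i < n \<Longrightarrow> w i \<noteq> 0 \<Longrightarrow> (\<Sum>i<n. (w i)\<^sup>2) > (0::real)"
  by (rule sum_pos2[of _ i]) auto

lemma eventually_at_real:
  assumes "eventually P (at (s0::real))" "P s0"
  shows "\<exists>d>0. \<forall>s. \<bar>s - s0\<bar> < d \<longrightarrow> P s"
proof -
  from assms(1) obtain d where d: "d > 0" "\<forall>s. s \<noteq> s0 \<and> dist s s0 < d \<longrightarrow> P s"
    unfolding eventually_at by auto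
  thus ?thesis using assms(2) by (metis dist_real_def)
qed

lemma step_good:
  assumes t: "t \<ge> 2" and gd: "good n g S" and hg: "hyp n g"
    and IH: "\<And>y'. \<forall>j<n. y' j \<ge> 0 \<Longrightarrow> hyp n (Hs t n g y')"
    and y0: "\<forall>j<n. y j \<ge> 0" and ypos: "\<forall>j\<in>S. y j > 0"
  shows "hyp n (Hs (Suc t) n g y)"
proof (cases "S = {}")
  case True
  have "Hs (Suc t) n g y i j = 0" if "i < n" "j < n" for i j
    using H_zero[OF _ gd that] True t by auto
  hence "bf n (Hs (Suc t) n g y) x v = 0" for x v unfolding bf_def by simp
  thus ?thesis unfolding hyp_def by simp
next
  case False
  then obtain i0 where i0: "i0 \<in> S" by blast
  have sym: "symm n g" and Sn: "S \<subseteq> {..<n}" using gd unfolding good_def by auto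
  have gn: "gnn n g" by (rule good_gnn[OF gd])
  have i0n: "i0 < n" using i0 Sn by auto
  have finS: "finite S" using Sn finite_subset by blast
  have t1: "t \<ge> 1" using t by simp
  define yp where "yp s = (\<lambda>j. (1 - s) * ev i0 j + s * y j)" for s :: real
  define Hp where "Hp s = Hs (Suc t) n g (yp s)" for s
  have yp0: "\<forall>j<n. yp s j \<ge> 0" if "0 \<le> s" "s \<le> 1" for s
    using that y0 unfolding yp_def ev_def by auto
  have yppos: "\<forall>j\<in>S. yp s j > 0" if "0 < s" "s \<le> 1" for s
  proof
    fix j assume j: "j \<in> S"
    have "s * y j > 0" using that ypos j by simp
    moreover have "(1 - s) * ev i0 j \<ge> 0" using that unfolding ev_def by auto
    ultimately show "yp s j > 0" unfolding yp_def by linarith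
  qed
  have ypb: "yp s j \<le> 1 + y j" if "0 \<le> s" "s \<le> 1" "j < n" for s j
  proof -
    have "(1 - s) * ev i0 j \<le> 1" using that unfolding ev_def by auto
    moreover have "s * y j \<le> y j" using that y0 by (simp add: mult_left_le_one_le)
    ultimately show ?thesis unfolding yp_def by linarith
  qed
  have Hsym: "symm n (Hp s)" for s unfolding Hp_def by (rule Hs_symm[OF sym]) (use t in auto)
  have base: "hyp n (Hp 0)"
  proof -
    have "yp 0 = ev i0" unfolding yp_def by auto
    thus ?thesis unfolding Hp_def using base_hyp[OF t sym gn hg i0n] by simp
  qed
  define A where "A i = Vol (Suc t) n g ((\<lambda>_. ev i0)(t := ev i))" for i
  define B where "B i = Vol (Suc t) n g ((\<lambda>_. y)(t := ev i))" for i
  define m where "m i = min (A i) (B i) * (1/2) ^ t / (1 + y i)" for i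
  have Apos: "A i > 0" if i: "i \<in> S" for i unfolding A_def
      by (rule Hy_pos2[OF gd i i0]) (auto simp: ev_def)
  have Bpos: "B i > 0" if i: "i \<in> S" for i unfolding B_def using Hy_pos2[OF gd i i y0] ypos i by auto
  have mpos: "m i > 0" if i: "i \<in> S" for i
  proof -
    have "A i > 0" by (rule Apos[OF i])
    moreover have "B i > 0" by (rule Bpos[OF i])
    moreover have "1 + y i > 0" using y0 i Sn by (smt (verit) lessThan_iff subset_eq)
    ultimately show ?thesis unfolding m_def by simp
  qed
  define \<delta> where "\<delta> = Min (m ` S)"
  have \<delta>pos: "\<delta> > 0" unfolding \<delta>_def using finS False mpos by (subst Min_gr_iff) auto
  have \<delta>le: "\<delta> \<le> m i" if "i \<in> S" for i unfolding \<delta>_def using finS that by (intro Min_le) auto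
  define D where "D s i = (\<Sum>j<n. Hp s i j * yp s j) / yp s i" for s i
  have Dge: "D s i \<ge> \<delta>" if s: "0 < s" "s \<le> 1" and i: "i \<in> S" for s i
  proof -
    have iS: "i < n" using i Sn by auto
    have num: "(\<Sum>j<n. Hp s i j * yp s j) \<ge> min (A i) (B i) * (1/2) ^ t"
      unfolding Hp_def Hy_eq[OF t1] A_def B_def yp_def
      by (rule Hy_lower[OF gd y0]) (use s in auto)
    have "m i \<le> D s i" unfolding m_def D_def
    proof (rule frac_le)
      have "0 \<le> min (A i) (B i) * (1 / 2) ^ t" using Apos[OF i] Bpos[OF i] by simp
      thus "0 \<le> (\<Sum>j<n. Hp s i j * yp s j)" using num by linarith
      show "min (A i) (B i) * (1 / 2) ^ t \<le> (\<Sum>j<n. Hp s i j * yp s j)" using num .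
      show "0 < yp s i" using yppos[OF s] i by auto
      show "yp s i \<le> 1 + y i" using ypb[of s i] s iS by auto
    qed
    thus ?thesis using \<delta>le[OF i] by simp
  qed
  have ypc: "isCont (\<lambda>s. yp s k) s0" for k s0 unfolding yp_def by (intro continuous_intros)
  have Hc: "isCont (\<lambda>s. Hp s i j) s0" for i j s0
    unfolding Hp_def Hs_def
  proof (rule Vol_isCont)
    fix u k
    show "isCont (\<lambda>s. ((\<lambda>_. yp s)(Suc t - 2 := ev j, Suc t - 1 := ev i)) u k) s0"
      using ypc by (cases "u = Suc t - 1"; cases "u = Suc t - 2") auto
  qed
  have op1: "\<exists>\<eta>>0. \<forall>s. 0 < s \<and> s \<le> 1 \<and> \<bar>s - s0\<bar> < \<eta> \<longrightarrow> hyp n (Hp s)"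
    if s0: "0 \<le> s0" "s0 \<le> 1" and h0: "hyp n (Hp s0)" for s0
  proof -
    define e0 where "e0 = \<delta> / (2 * (real n + 1))"
    have e0: "e0 > 0" unfolding e0_def using \<delta>pos by simp
    have "eventually (\<lambda>s. \<forall>ij\<in>{..<n} \<times> {..<n}. dist (Hp s (fst ij) (snd ij)) (Hp s0 (fst ij) (snd ij)) < e0) (at s0)"
      by (intro eventually_ball_finite ballI tendstoD[OF _ e0]) (auto intro: Hc[unfolded isCont_def])
    from eventually_at_real[OF this] obtain d where d: "d > 0"
      "\<forall>s. \<bar>s - s0\<bar> < d \<longrightarrow> (\<forall>ij\<in>{..<n} \<times> {..<n}. dist (Hp s (fst ij) (snd ij)) (Hp s0 (fst ij) (snd ij)) < e0)"
      using e0 by auto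
    have close: "\<bar>Hp s0 i j - Hp s i j\<bar> \<le> e0" if "\<bar>s - s0\<bar> < d" "i < n" "j < n" for s i j
      using d(2) that by (force simp: dist_real_def abs_minus_commute)
    have "\<forall>s. 0 < s \<and> s \<le> 1 \<and> \<bar>s - s0\<bar> < d \<longrightarrow> hyp n (Hp s)"
    proof (intro allI impI, elim conjE)
      fix s assume s: "0 < s" "s \<le> 1" "\<bar>s - s0\<bar> < d"
      show "hyp n (Hp s)"
      proof (rule ccontr)
        assume nh: "\<not> hyp n (Hp s)"
        have qp: "hyp n (Hp s) \<or> (\<exists>p q. (\<forall>a b. bf n (Hp s) (\<lambda>i. a * p i + b * q i) (\<lambda>i. a * p i + b * q i)
              \<ge> \<delta> * (\<Sum>i<n. (a * p i + b * q i)\<^sup>2))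
          \<and> (\<forall>a b. (\<forall>i<n. a * p i + b * q i = 0) \<longrightarrow> a = 0 \<and> b = 0))"
        proof (rule quant_pos[OF Hsym Sn, where D = "D s"])
          show "\<And>i. i \<in> S \<Longrightarrow> \<delta> \<le> D s i" using Dge s by auto
          show "0 < \<delta>" by (rule \<delta>pos)
          show "\<And>i j. i < n \<Longrightarrow> j < n \<Longrightarrow> i \<notin> S \<or> j \<notin> S \<Longrightarrow> Hp s i j = 0"
            unfolding Hp_def by (rule H_zero[OF t1 gd])
          show "\<And>v. bf n (Hp s) v v \<le> (\<Sum>i\<in>S. (\<Sum>j<n. Hp s i j * v j)\<^sup>2 / D s i)"
            unfolding Hp_def D_def by (rule gap_lemma[OF t gd IH yp0 yppos]) (use s in auto)
        qed
        with nh obtain p q where pq1: "\<forall>a b. bf n (Hp s) (\<lambda>i. a * p i + b * q i) (\<lambda>i. a * p i + b * q i)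
              \<ge> \<delta> * (\<Sum>i<n. (a * p i + b * q i)\<^sup>2)"
          and pq2: "\<forall>a b. (\<forall>i<n. a * p i + b * q i = 0) \<longrightarrow> a = 0 \<and> b = 0" by blast
        have "\<not> hyp n (Hp s0)"
        proof (rule not_hyp_of_pos2[OF Hsym])
          fix a b :: real assume ab: "(a, b) \<noteq> (0, 0)"
          let ?w = "\<lambda>i. a * p i + b * q i"
          obtain i where i: "i < n" "?w i \<noteq> 0" using pq2 ab by blast
          have W: "(\<Sum>i<n. (?w i)\<^sup>2) > 0" by (rule sumsq_pos[of i n ?w]) (use i in auto)
          have per: "\<bar>bf n (Hp s0) ?w ?w - bf n (Hp s) ?w ?w\<bar> \<le> e0 * real n * (\<Sum>i<n. (?w i)\<^sup>2)"
            by (rule bf_perturb) (use close s in auto)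
          have "e0 * real n < \<delta> / 2" unfolding e0_def using \<delta>pos by (simp add: field_simps)
          hence "e0 * real n * (\<Sum>i<n. (?w i)\<^sup>2) < \<delta> / 2 * (\<Sum>i<n. (?w i)\<^sup>2)"
            using W by (intro mult_strict_right_mono) auto
          moreover have "bf n (Hp s) ?w ?w \<ge> \<delta> * (\<Sum>i<n. (?w i)\<^sup>2)" using pq1 by blast
          moreover have "\<delta> * (\<Sum>i<n. (?w i)\<^sup>2) > 0" using W \<delta>pos by simp
          moreover have "\<delta> / 2 * (\<Sum>i<n. (?w i)\<^sup>2) = \<delta> * (\<Sum>i<n. (?w i)\<^sup>2) / 2" by simp
          moreover have "bf n (Hp s0) ?w ?w \<ge> bf n (Hp s) ?w ?w - e0 * real n * (\<Sum>i<n. (?w i)\<^sup>2)"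
            using per by (simp add: abs_le_iff)
          ultimately show "bf n (Hp s0) ?w ?w > 0" by linarith
        qed
        thus False using h0 by simp
      qed
    qed
    thus ?thesis using d(1) by blast
  qed
  have op2: "\<exists>\<eta>>0. \<forall>s. \<bar>s - s0\<bar> < \<eta> \<longrightarrow> \<not> hyp n (Hp s)"
    if nh: "\<not> hyp n (Hp s0)" for s0
  proof -
    from nh obtain x v where xv: "bf n (Hp s0) x x > 0"
      "(bf n (Hp s0) x v)\<^sup>2 < bf n (Hp s0) x x * bf n (Hp s0) v v"
      unfolding hyp_def by (auto simp: not_le)
    have c1: "isCont (\<lambda>s. bf n (Hp s) x x) s0" by (rule bf_isCont[OF Hc])
    have c3: "isCont (\<lambda>s. bf n (Hp s) v v) s0" by (rule bf_isCont[OF Hc])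
    have c4: "isCont (\<lambda>s. bf n (Hp s) x v) s0" by (rule bf_isCont[OF Hc])
    have c2: "isCont (\<lambda>s. bf n (Hp s) x x * bf n (Hp s) v v - (bf n (Hp s) x v)\<^sup>2) s0"
      using c1 c3 c4 by (intro continuous_intros) auto
    have "eventually (\<lambda>s. bf n (Hp s) x x > 0) (at s0)"
      using order_tendstoD(1)[OF c1[unfolded isCont_def] xv(1)] .
    moreover have "eventually (\<lambda>s. bf n (Hp s) x x * bf n (Hp s) v v - (bf n (Hp s) x v)\<^sup>2 > 0) (at s0)"
      using order_tendstoD(1)[OF c2[unfolded isCont_def], of 0] xv(2) by simp
    ultimately have ev: "eventually (\<lambda>s. \<not> hyp n (Hp s)) (at s0)"
      by eventually_elim (auto simp: hyp_def not_le)
    show ?thesis by (rule eventually_at_real[OF ev nh])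
  qed
  have "hyp n (Hp 1)"
    by (rule interval_conn[of "\<lambda>s. hyp n (Hp s)", OF base op1 op2]) auto
  moreover have "yp 1 = y" unfolding yp_def by auto
  ultimately show ?thesis unfolding Hp_def by simp
qed

lemma Vol_tendsto:
  assumes "\<And>i j. ((\<lambda>k. G k i j) \<longlongrightarrow> g i j) F" "\<And>u m. ((\<lambda>k. X k u m) \<longlongrightarrow> x u m) F"
  shows "((\<lambda>k. Vol t n (G k) (X k)) \<longlongrightarrow> Vol t n g x) F"
  unfolding Vol_def case_prod_beta by (intro tendsto_intros assms)

lemma bf_tendsto:
  assumes "\<And>i j. ((\<lambda>k. B k i j) \<longlongrightarrow> B0 i j) F"
  shows "((\<lambda>k. bf n (B k) x v) \<longlongrightarrow> bf n B0 x v) F"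
  unfolding bf_def by (intro tendsto_intros assms)

lemma hyp_limit:
  assumes h: "\<And>k. hyp n (B k)" and lim: "\<And>i j. (\<lambda>k. B k i j) \<longlonglongrightarrow> B0 i j"
  shows "hyp n B0"
  unfolding hyp_def
proof (intro allI impI)
  fix x v assume pos: "bf n B0 x x > 0"
  have l1: "(\<lambda>k. bf n (B k) x x) \<longlonglongrightarrow> bf n B0 x x" by (rule bf_tendsto[OF lim])
  have l2: "(\<lambda>k. bf n (B k) v v) \<longlonglongrightarrow> bf n B0 v v" by (rule bf_tendsto[OF lim])
  have l3: "(\<lambda>k. bf n (B k) x v) \<longlonglongrightarrow> bf n B0 x v" by (rule bf_tendsto[OF lim])
  have ev: "eventually (\<lambda>k. bf n (B k) x x > 0) sequentially"
    by (rule order_tendstoD(1)[OF l1 pos])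
  have "eventually (\<lambda>k. bf n (B k) x x * bf n (B k) v v \<le> (bf n (B k) x v)\<^sup>2) sequentially"
    using ev by eventually_elim (use h in \<open>auto simp: hyp_def\<close>)
  moreover have "(\<lambda>k. bf n (B k) x x * bf n (B k) v v) \<longlonglongrightarrow> bf n B0 x x * bf n B0 v v"
    by (intro tendsto_intros l1 l2)
  moreover have "(\<lambda>k. (bf n (B k) x v)\<^sup>2) \<longlonglongrightarrow> (bf n B0 x v)\<^sup>2"
    by (intro tendsto_intros l3)
  ultimately show "bf n B0 x x * bf n B0 v v \<le> (bf n B0 x v)\<^sup>2"
    by (intro tendsto_le[of sequentially]) auto
qed

lemma perturb_good:
  assumes gn: "gnn n g" and sym: "symm n g" and hg: "hyp n g" and c: "c > 0"
  defines "r \<equiv> \<lambda>i. \<Sum>j<n. g i j"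
  defines "gc \<equiv> \<lambda>i j. g i j + c * r i * r j"
  shows "good n gc {i. i < n \<and> r i > 0}" "hyp n gc" "gnn n gc" "symm n gc"
proof -
  let ?S = "{i. i < n \<and> r i > 0}"
  have r0: "r i \<ge> 0" if "i < n" for i unfolding r_def using gn that unfolding gnn_def by (auto intro: sum_nonneg)
  have rz: "g i j = 0" if "i < n" "j < n" "r i = 0" for i j
  proof -
    have "(\<Sum>j<n. g i j) = 0" using that unfolding r_def by simp
    hence "\<forall>j\<in>{..<n}. g i j = 0" using gn that(1) unfolding gnn_def by (subst (asm) sum_nonneg_eq_0_iff) auto
    thus ?thesis using that by auto
  qed
  have gsym: "g i j = g j i" if "i < n" "j < n" for i j using sym that unfolding symm_def by auto
  show symgc: "symm n gc" unfolding symm_def gc_def using gsym by (auto simp: mult.commute)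
  show gngc: "gnn n gc" unfolding gnn_def gc_def using gn r0 c unfolding gnn_def by (auto intro!: add_nonneg_nonneg)
  show "good n gc ?S" unfolding good_def
  proof (intro conjI allI impI)
    show "?S \<subseteq> {..<n}" by auto
    show "symm n gc" by (rule symgc)
  next
    fix i j assume ij: "i < n" "j < n" "i \<in> ?S \<and> j \<in> ?S"
    have "c * r i * r j > 0" using ij c by auto
    moreover have "g i j \<ge> 0" using gn ij unfolding gnn_def by auto
    ultimately show "gc i j > 0" unfolding gc_def by linarith
  next
    fix i j assume ij: "i < n" "j < n" "i \<notin> ?S \<or> j \<notin> ?S"
    hence "r i = 0 \<or> r j = 0" using r0 ij by force
    thus "gc i j = 0" unfolding gc_def using rz[OF ij(1,2)] rz[OF ij(2,1)] gsym[OF ij(1,2)] by auto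
  qed
  show "hyp n gc"
  proof (rule hyp_of_hyperplane[OF symgc, of r], intro allI impI)
    fix v assume v: "(\<Sum>i<n. r i * v i) = 0"
    have e: "bf n gc v v = bf n g v v + c * (\<Sum>i<n. r i * v i)\<^sup>2"
      unfolding bf_def gc_def
      by (simp add: algebra_simps sum.distrib sum_distrib_left power2_eq_square sum_product)
    have "bf n g v v \<le> 0"
    proof (cases "bf n g (\<lambda>_. 1) (\<lambda>_. 1) > 0")
      case True
      have "bf n g (\<lambda>_. 1) v = (\<Sum>j<n. r j * v j)"
        unfolding bf_def r_def by (subst sum.swap) (auto simp: sum_distrib_right gsym intro!: sum.cong)
      hence "bf n g (\<lambda>_. 1) v = 0" using v by simp
      thus ?thesis using hg True unfolding hyp_def
        by (metis mult_le_0_iff not_less power2_eq_square mult_zero_left)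
    next
      case False
      have "bf n g (\<lambda>_. 1) (\<lambda>_. 1) = (\<Sum>i<n. r i)" unfolding bf_def r_def by simp
      hence "(\<Sum>i<n. r i) \<le> 0" using False by simp
      hence "\<forall>i\<in>{..<n}. r i = 0" using r0 by (subst sum_nonneg_eq_0_iff[symmetric]) (auto intro: antisym sum_nonneg)
      hence "bf n g v v = 0" unfolding bf_def using rz by auto
      thus ?thesis by simp
    qed
    thus "bf n gc v v \<le> 0" using e v by simp
  qed
qed

theorem hess_hyp:
  assumes "t \<ge> 2"
  shows "gnn n g \<Longrightarrow> symm n g \<Longrightarrow> hyp n g \<Longrightarrow> \<forall>j<n. y j \<ge> 0 \<Longrightarrow> hyp n (Hs t n g y)"
  using assms
proof (induction t arbitrary: g y rule: nat_induct_at_least)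
  case base
  show ?case
  proof (rule hyp_ext[OF base.prems(3)])
    fix i j assume "i < n" "j < n"
    thus "g i j = Hs 2 n g y i j" using Hs_2 base.prems(2) unfolding symm_def by auto
  qed
next
  case (Suc t)
  define c where "c k = inverse (real (Suc k))" for k
  define r where "r i = (\<Sum>j<n. g i j)" for i
  define gk where "gk k i j = g i j + c k * r i * r j" for k i j
  define yk where "yk k j = y j + c k" for k j
  have cpos: "c k > 0" for k unfolding c_def by simp
  have c0: "c \<longlonglongrightarrow> 0" unfolding c_def by (rule LIMSEQ_inverse_real_of_nat)
  have hk: "hyp n (Hs (Suc t) n (gk k) (yk k))" for k
  proof -
    note P = perturb_good[OF Suc.prems(1,2,3) cpos[of k]]
    have gd: "good n (gk k) {i. i < n \<and> r i > 0}" using P(1) unfolding gk_def r_def .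
    have hyk: "hyp n (gk k)" using P(2) unfolding gk_def r_def .
    have gnk: "gnn n (gk k)" using P(3) unfolding gk_def r_def .
    have symk: "symm n (gk k)" using P(4) unfolding gk_def r_def .
    show ?thesis
    proof (rule step_good[OF Suc.hyps(1) gd hyk])
      show "\<And>y'. \<forall>j<n. 0 \<le> y' j \<Longrightarrow> hyp n (Hs t n (gk k) y')"
        by (rule Suc.IH[OF gnk symk hyk]) (use Suc.hyps in auto)
      show "\<forall>j<n. 0 \<le> yk k j" using Suc.prems(4) cpos[of k] unfolding yk_def by (auto intro: add_nonneg_nonneg less_imp_le)
      show "\<forall>j\<in>{i. i < n \<and> 0 < r i}. 0 < yk k j" using Suc.prems(4) cpos[of k] unfolding yk_def
        by (auto intro: add_nonneg_pos)
    qed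
  qed
  show ?case
  proof (rule hyp_limit[OF hk])
    fix i j
    show "(\<lambda>k. Hs (Suc t) n (gk k) (yk k) i j) \<longlonglongrightarrow> Hs (Suc t) n g y i j"
      unfolding Hs_def
    proof (rule Vol_tendsto)
      fix a b
      show "(\<lambda>k. gk k a b) \<longlonglongrightarrow> g a b" unfolding gk_def
        using c0 by (auto intro!: tendsto_eq_intros)
      fix u m
      show "(\<lambda>k. ((\<lambda>_. yk k)(Suc t - 2 := ev j, Suc t - 1 := ev i)) u m)
          \<longlonglongrightarrow> ((\<lambda>_. y)(Suc t - 2 := ev j, Suc t - 1 := ev i)) u m"
        unfolding yk_def using c0 by (cases "u = Suc t - 1"; cases "u = Suc t - 2") (auto intro!: tendsto_eq_intros)
    qed
  qed
qed

lemma Vol_deriv: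
  "DERIV (\<lambda>s. Vol t n g (\<lambda>u m. \<alpha> u m + s * \<beta> u m)) s :>
     (\<Sum>u<t. Vol t n g ((\<lambda>u m. \<alpha> u m + s * \<beta> u m)(u := \<beta> u)))"
proof -
  let ?X = "\<lambda>s u m. \<alpha> u m + s * \<beta> u m"
  let ?W = "\<lambda>\<phi>. (\<Prod>(u,v)\<in>Ed t. g (\<phi> u) (\<phi> v))"
  let ?P = "{0..<t} \<rightarrow>\<^sub>E {0..<n}"
  have d: "DERIV (\<lambda>s. ?W \<phi> * (\<Prod>u<t. ?X s u (\<phi> u))) s :>
      ?W \<phi> * (\<Sum>u<t. \<beta> u (\<phi> u) * (\<Prod>w\<in>{..<t} - {u}. ?X s w (\<phi> w)))" for \<phi>
  proof (rule DERIV_cmult, rule has_field_derivative_prod)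
    fix u
    show "((\<lambda>s. \<alpha> u (\<phi> u) + s * \<beta> u (\<phi> u)) has_field_derivative \<beta> u (\<phi> u)) (at s)"
      by (auto intro!: derivative_eq_intros)
  qed
  have "DERIV (\<lambda>s. Vol t n g (?X s)) s :> (\<Sum>\<phi>\<in>?P. ?W \<phi> * (\<Sum>u<t. \<beta> u (\<phi> u) * (\<Prod>w\<in>{..<t} - {u}. ?X s w (\<phi> w))))"
    unfolding Vol_def by (rule DERIV_sum) (rule d)
  also have "(\<Sum>\<phi>\<in>?P. ?W \<phi> * (\<Sum>u<t. \<beta> u (\<phi> u) * (\<Prod>w\<in>{..<t} - {u}. ?X s w (\<phi> w))))
      = (\<Sum>u<t. Vol t n g ((?X s)(u := \<beta> u)))"
  proof -
    have "(\<Sum>\<phi>\<in>?P. ?W \<phi> * (\<Sum>u<t. \<beta> u (\<phi> u) * (\<Prod>w\<in>{..<t} - {u}. ?X s w (\<phi> w))))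
        = (\<Sum>u<t. \<Sum>\<phi>\<in>?P. ?W \<phi> * \<beta> u (\<phi> u) * (\<Prod>w\<in>{..<t} - {u}. ?X s w (\<phi> w)))"
      by (subst sum.swap) (simp add: sum_distrib_left mult.assoc)
    also have "\<dots> = (\<Sum>u<t. Vol t n g ((?X s)(u := \<beta> u)))"
      by (intro sum.cong refl) (simp add: Vol_upd_expand)
    finally show ?thesis .
  qed
  finally show ?thesis .
qed

lemma Vol_slot_swap_to:
  assumes sym: "symm n g" and uv: "u < t" "v < t"
  shows "Vol t n g ((\<lambda>_. y)(u := d)) = Vol t n g ((\<lambda>_. y)(v := d))"
proof -
  have "Vol t n g ((\<lambda>_. y)(u := d)) = Vol t n g (\<lambda>w. ((\<lambda>_. y)(u := d)) (swp u v w))"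
    by (rule Vol_swap[OF sym uv, symmetric])
  also have "(\<lambda>w. ((\<lambda>_. y)(u := d)) (swp u v w)) = (\<lambda>_. y)(v := d)"
    by (intro ext) (auto simp: swp_def)
  finally show ?thesis .
qed

lemma sum_const_lt: "(\<Sum>u<t. c) = real t * (c::real)"
  by simp

locale mink =
  fixes n t :: nat and g :: "nat \<Rightarrow> nat \<Rightarrow> real" and a b :: "nat \<Rightarrow> real"
  assumes t: "t \<ge> 2" and gn: "gnn n g" and sym: "symm n g" and hg: "hyp n g"
    and a0: "\<forall>j<n. a j \<ge> 0" and b0: "\<forall>j<n. b j \<ge> 0"

context mink
begin

definition "dd m = b m - a m"
definition "yy s = (\<lambda>m. a m + s * dd m)"
definition "hh s = Vol t n g (\<lambda>_. yy s)"
definition "h1 s = Vol t n g ((\<lambda>_. yy s)(t - 1 := dd))"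
definition "h2 s = Vol t n g ((\<lambda>_. yy s)(t - 2 := dd, t - 1 := dd))"

lemma yy0: "0 \<le> s \<Longrightarrow> s \<le> 1 \<Longrightarrow> \<forall>j<n. yy s j \<ge> 0"
proof (intro allI impI)
  fix j assume s: "0 \<le> s" "s \<le> 1" and j: "j < n"
  have "yy s j = (1 - s) * a j + s * b j" unfolding yy_def dd_def by (simp add: algebra_simps)
  also have "\<dots> \<ge> 0" using s a0 b0 j by (intro add_nonneg_nonneg mult_nonneg_nonneg) auto
  finally show "yy s j \<ge> 0" .
qed

lemma D1: "DERIV hh s :> real t * h1 s"
proof -
  have "DERIV (\<lambda>s. Vol t n g (\<lambda>u m. a m + s * dd m)) s :> (\<Sum>u<t. Vol t n g ((\<lambda>u m. a m + s * dd m)(u := dd)))"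
    by (rule Vol_deriv)
  also have "(\<Sum>u<t. Vol t n g ((\<lambda>u m. a m + s * dd m)(u := dd))) = (\<Sum>u<t. h1 s)"
    unfolding h1_def yy_def using t by (intro sum.cong refl Vol_slot_swap_to[OF sym]) auto
  finally show ?thesis unfolding hh_def yy_def by simp
qed

lemma D2: "DERIV h1 s :> real (t - 1) * h2 s"
proof -
  let ?\<alpha> = "\<lambda>u. if u = t - 1 then dd else a"
  let ?\<beta> = "\<lambda>u. if u = t - 1 then (\<lambda>_. 0) else dd"
  have e: "(\<lambda>_. yy s)(t - 1 := dd) = (\<lambda>u m. ?\<alpha> u m + s * ?\<beta> u m)" for s
    unfolding yy_def by (intro ext) auto
  have "DERIV (\<lambda>s. Vol t n g (\<lambda>u m. ?\<alpha> u m + s * ?\<beta> u m)) s :>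
      (\<Sum>u<t. Vol t n g ((\<lambda>u m. ?\<alpha> u m + s * ?\<beta> u m)(u := ?\<beta> u)))"
    by (rule Vol_deriv)
  also have "(\<Sum>u<t. Vol t n g ((\<lambda>u m. ?\<alpha> u m + s * ?\<beta> u m)(u := ?\<beta> u))) = real (t - 1) * h2 s"
  proof -
    obtain r where r: "t = Suc r" using t by (cases t) auto
    have A: "(\<Sum>u<t. Vol t n g ((\<lambda>u m. ?\<alpha> u m + s * ?\<beta> u m)(u := ?\<beta> u)))
        = (\<Sum>u<r. Vol t n g ((\<lambda>u m. ?\<alpha> u m + s * ?\<beta> u m)(u := ?\<beta> u))) + Vol t n g ((\<lambda>u m. ?\<alpha> u m + s * ?\<beta> u m)(r := ?\<beta> r))"
      unfolding r by (rule sum.lessThan_Suc)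
    have B: "Vol t n g ((\<lambda>u m. ?\<alpha> u m + s * ?\<beta> u m)(r := ?\<beta> r)) = 0"
    proof -
      have "?\<beta> r = (\<lambda>_. 0)" using r by simp
      thus ?thesis using r Vol_slot_zero[of r t n g "\<lambda>u m. ?\<alpha> u m + s * ?\<beta> u m"] by simp
    qed
    have C: "(\<Sum>u<r. Vol t n g ((\<lambda>u m. ?\<alpha> u m + s * ?\<beta> u m)(u := ?\<beta> u))) = (\<Sum>u<r. h2 s)"
    proof (intro sum.cong refl)
      fix u assume u: "u \<in> {..<r}"
      let ?Z = "((\<lambda>_. yy s)(t - 1 := dd))(u := dd)"
      have "(\<lambda>u m. ?\<alpha> u m + s * ?\<beta> u m)(u := ?\<beta> u) = ?Z" using u r unfolding yy_def by (intro ext) auto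
      moreover have "Vol t n g ?Z = Vol t n g (\<lambda>w. ?Z (swp u (t - 2) w))"
        by (rule Vol_swap[OF sym, symmetric]) (use u r t in auto)
      moreover have "(\<lambda>w. ?Z (swp u (t - 2) w)) = (\<lambda>_. yy s)(t - 2 := dd, t - 1 := dd)"
        using u r t by (intro ext) (auto simp: swp_def)
      ultimately show "Vol t n g ((\<lambda>u m. ?\<alpha> u m + s * ?\<beta> u m)(u := ?\<beta> u)) = h2 s"
        unfolding h2_def by simp
    qed
    show ?thesis unfolding A B C using r by simp
  qed
  finally show ?thesis unfolding h1_def e .
qed

lemma hyp_ineq:
  assumes s: "0 \<le> s" "s \<le> 1" and pos: "hh s > 0"
  shows "hh s * h2 s \<le> (h1 s)\<^sup>2"
proof -
  have H: "hyp n (Hs t n g (yy s))" by (rule hess_hyp[OF t gn sym hg yy0[OF s]])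
  have t2: "Suc (t - 2) = t - 1" using t by simp
  have e1: "bf n (Hs t n g (yy s)) (yy s) (yy s) = hh s"
    unfolding Hs_bf[OF t] hh_def by (intro arg_cong[where f="Vol t n g"] ext) (use t in auto)
  have e2: "bf n (Hs t n g (yy s)) (yy s) dd = h1 s"
  proof -
    have "bf n (Hs t n g (yy s)) (yy s) dd = Vol t n g ((\<lambda>_. yy s)(t - 2 := dd))"
      unfolding Hs_bf[OF t] by (intro arg_cong[where f="Vol t n g"] ext) (use t in auto)
    also have "\<dots> = h1 s" unfolding h1_def by (rule Vol_slot_swap_to[OF sym]) (use t in auto)
    finally show ?thesis .
  qed
  have e3: "bf n (Hs t n g (yy s)) dd dd = h2 s" unfolding Hs_bf[OF t] h2_def ..
  show ?thesis using H pos unfolding hyp_def e1[symmetric] e2[symmetric] e3[symmetric] by blast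
qed

end

context mink
begin

lemma t0: "real t > 0" using t by simp

lemma hh_pos:
  assumes PA: "Vol t n g (\<lambda>_. a) > 0" and PB: "Vol t n g (\<lambda>_. b) > 0" and s: "0 \<le> s" "s \<le> 1"
  shows "hh s > 0"
proof -
  have yyf: "yy s m = (1 - s) * a m + s * b m" for m unfolding yy_def dd_def by (simp add: algebra_simps)
  have L1: "hh s \<ge> (1 - s) ^ t * Vol t n g (\<lambda>_. a)"
  proof -
    have "(1 - s) ^ t * Vol t n g (\<lambda>_. a) = Vol t n g (\<lambda>u m. (1 - s) * a m)"
      using Vol_scale[of t n g "\<lambda>_. 1 - s" "\<lambda>_. a"] by simp
    also have "\<dots> \<le> hh s" unfolding hh_def
      using gn s a0 b0 by (intro Vol_mono) (auto simp: xnn_def yyf)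
    finally show ?thesis .
  qed
  have L2: "hh s \<ge> s ^ t * Vol t n g (\<lambda>_. b)"
  proof -
    have "s ^ t * Vol t n g (\<lambda>_. b) = Vol t n g (\<lambda>u m. s * b m)"
      using Vol_scale[of t n g "\<lambda>_. s" "\<lambda>_. b"] by simp
    also have "\<dots> \<le> hh s" unfolding hh_def
      using gn s a0 b0 by (intro Vol_mono) (auto simp: xnn_def yyf)
    finally show ?thesis .
  qed
  show ?thesis
  proof (cases "s < 1")
    case True
    hence "(1 - s) ^ t * Vol t n g (\<lambda>_. a) > 0" using PA by simp
    thus ?thesis using L1 by linarith
  next
    case False
    hence "s = 1" using s by simp
    thus ?thesis using L2 PB by simp
  qed
qed

lemma minkowski_pos:
  assumes PA: "Vol t n g (\<lambda>_. a) > 0" and PB: "Vol t n g (\<lambda>_. b) > 0"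
  shows "Vol t n g (\<lambda>_. b) powr (1 / real t) \<le> Vol t n g (\<lambda>_. a) powr (1 / real t - 1) * Vol t n g ((\<lambda>_. a)(t - 1 := b))"
proof -
  define \<psi> where "\<psi> s = hh s powr (1 / real t)" for s
  define \<psi>' where "\<psi>' s = hh s powr (1 / real t - 1) * h1 s" for s
  have pos: "hh s > 0" if "0 \<le> s" "s \<le> 1" for s using hh_pos[OF PA PB that] .
  have d1: "DERIV \<psi> s :> \<psi>' s" if s: "0 \<le> s" "s \<le> 1" for s
  proof -
    have "DERIV \<psi> s :> 1 / real t * hh s powr (1 / real t - of_nat 1) * (real t * h1 s)"
      unfolding \<psi>_def by (rule DERIV_fun_powr[OF D1 pos[OF s]])
    thus ?thesis unfolding \<psi>'_def by (rule DERIV_cong) (use t0 in \<open>simp add: field_simps\<close>)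
  qed
  have d2: "\<exists>D. DERIV \<psi>' s :> D \<and> D \<le> 0" if s: "0 \<le> s" "s \<le> 1" for s
  proof -
    let ?r = "1 / real t - 1"
    have hp: "hh s > 0" by (rule pos[OF s])
    have "DERIV \<psi>' s :> (?r * hh s powr (?r - of_nat 1) * (real t * h1 s)) * h1 s + (real (t - 1) * h2 s) * hh s powr ?r"
      unfolding \<psi>'_def by (rule DERIV_mult[OF DERIV_fun_powr[OF D1 hp] D2])
    moreover have "(?r * hh s powr (?r - of_nat 1) * (real t * h1 s)) * h1 s + (real (t - 1) * h2 s) * hh s powr ?r \<le> 0"
    proof -
      define p where "p = hh s powr (?r - 1)"
      have p: "p > 0" unfolding p_def using hp by simp
      have pr: "hh s powr ?r = p * hh s"
      proof -
        have "hh s powr ?r = hh s powr ((?r - 1) + 1)" by simp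
        also have "\<dots> = p * hh s powr 1" unfolding p_def by (rule powr_add)
        also have "hh s powr 1 = hh s" using hp by (simp add: powr_one)
        finally show ?thesis .
      qed
      have rt: "?r * real t = 1 - real t" using t0 by (simp add: field_simps)
      have tm: "real (t - 1) = real t - 1" using t by simp
      have "hh s powr (?r - of_nat 1) = p" unfolding p_def by simp
      hence "(?r * hh s powr (?r - of_nat 1) * (real t * h1 s)) * h1 s + (real (t - 1) * h2 s) * hh s powr ?r
          = p * (?r * real t) * (h1 s)\<^sup>2 + p * (real t - 1) * (hh s * h2 s)"
        unfolding pr tm by (simp add: power2_eq_square algebra_simps)
      also have "\<dots> = p * (real t - 1) * (hh s * h2 s - (h1 s)\<^sup>2)"
        unfolding rt by (simp add: algebra_simps)
      also have "\<dots> \<le> 0"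
      proof (rule mult_nonneg_nonpos)
        show "0 \<le> p * (real t - 1)" using p t by simp
        show "hh s * h2 s - (h1 s)\<^sup>2 \<le> 0" using hyp_ineq[OF s hp] by simp
      qed
      finally show ?thesis .
    qed
    ultimately show ?thesis by blast
  qed
  have mono: "\<psi>' x \<le> \<psi>' 0" if x: "0 \<le> x" "x \<le> 1" for x
    by (rule DERIV_nonpos_imp_nonincreasing[OF x(1)]) (use d2 x in auto)
  obtain z where z: "0 < z" "z < 1" "\<psi> 1 - \<psi> 0 = (1 - 0) * \<psi>' z"
    using MVT2[of 0 1 \<psi> \<psi>'] d1 by auto
  have main: "\<psi> 1 \<le> \<psi> 0 + \<psi>' 0" using z mono[of z] by simp
  have y0: "yy 0 = a" unfolding yy_def by auto
  have y1: "yy 1 = b" unfolding yy_def dd_def by auto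
  define PA' where "PA' = Vol t n g (\<lambda>_. a)"
  define W where "W = Vol t n g ((\<lambda>_. a)(t - 1 := b))"
  have h10: "h1 0 = W - PA'"
  proof -
    have "h1 0 = Vol t n g ((\<lambda>_. a)(t - 1 := (\<lambda>j. 1 * b j + (-1) * a j)))"
      unfolding h1_def y0 dd_def by simp
    also have "\<dots> = 1 * W + (-1) * Vol t n g ((\<lambda>_. a)(t - 1 := a))"
      unfolding W_def by (rule Vol_slot_lin) (use t in auto)
    also have "(\<lambda>_. a)(t - 1 := a) = (\<lambda>_. a)" by auto
    finally show ?thesis unfolding PA'_def by simp
  qed
  have "\<psi> 0 + \<psi>' 0 = PA' powr (1 / real t) + PA' powr (1 / real t - 1) * (W - PA')"
    unfolding \<psi>_def \<psi>'_def hh_def y0 h10 PA'_def ..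
  also have "PA' powr (1 / real t) = PA' powr (1 / real t - 1) * PA'"
  proof -
    have "PA' powr (1 / real t) = PA' powr ((1 / real t - 1) + 1)" by simp
    also have "\<dots> = PA' powr (1 / real t - 1) * PA' powr 1" by (rule powr_add)
    also have "PA' powr 1 = PA'" using PA unfolding PA'_def by (simp add: powr_one)
    finally show ?thesis .
  qed
  finally have "\<psi> 0 + \<psi>' 0 = PA' powr (1 / real t - 1) * W" by (simp add: algebra_simps)
  moreover have "\<psi> 1 = Vol t n g (\<lambda>_. b) powr (1 / real t)" unfolding \<psi>_def hh_def y1 ..
  ultimately show ?thesis using main unfolding PA'_def W_def by simp
qed

lemma minkowski:
  "(Vol t n g (\<lambda>_. a)) ^ (t - 1) * Vol t n g (\<lambda>_. b) \<le> (Vol t n g ((\<lambda>_. a)(t - 1 := b))) ^ t"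
proof -
  define PA where "PA = Vol t n g (\<lambda>_. a)"
  define PB where "PB = Vol t n g (\<lambda>_. b)"
  define W where "W = Vol t n g ((\<lambda>_. a)(t - 1 := b))"
  have PA0: "PA \<ge> 0" unfolding PA_def using gn a0 by (intro Vol_nonneg) (auto simp: xnn_def)
  have PB0: "PB \<ge> 0" unfolding PB_def using gn b0 by (intro Vol_nonneg) (auto simp: xnn_def)
  have W0: "W \<ge> 0" unfolding W_def using gn a0 b0 by (intro Vol_nonneg) (auto simp: xnn_def)
  show ?thesis
  proof (cases "PA > 0 \<and> PB > 0")
    case False
    hence "PA = 0 \<or> PB = 0" using PA0 PB0 by auto
    hence z: "PA ^ (t - 1) * PB = 0" using t by auto
    have w: "W ^ t \<ge> 0" using W0 by simp
    have "PA ^ (t - 1) * PB \<le> W ^ t" by (subst z) (rule w)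
    thus ?thesis unfolding PA_def PB_def W_def .
  next
    case True
    have ineq: "PB powr (1 / real t) \<le> PA powr (1 / real t - 1) * W"
      using minkowski_pos True unfolding PA_def PB_def W_def by blast
    have l: "(PB powr (1 / real t)) ^ t = PB"
    proof -
      have "(PB powr (1 / real t)) ^ t = (PB powr (1 / real t)) powr real t"
        using True by (simp add: powr_realpow)
      also have "\<dots> = PB" using True t0 by (simp add: powr_powr powr_one)
      finally show ?thesis .
    qed
    have r: "(PA powr (1 / real t - 1) * W) ^ t = PA powr (1 - real t) * W ^ t"
    proof -
      have "(PA powr (1 / real t - 1)) ^ t = (PA powr (1 / real t - 1)) powr real t"
        using True by (simp add: powr_realpow)
      also have "\<dots> = PA powr ((1 / real t - 1) * real t)" by (rule powr_powr)
      also have "(1 / real t - 1) * real t = 1 - real t" using t0 by (simp add: field_simps)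
      finally show ?thesis by (simp add: power_mult_distrib)
    qed
    have "PB \<le> PA powr (1 - real t) * W ^ t"
      using power_mono[OF ineq, of t] l r by simp
    hence "PA ^ (t - 1) * PB \<le> PA ^ (t - 1) * (PA powr (1 - real t) * W ^ t)"
      using PA0 by (intro mult_left_mono) auto
    also have "PA ^ (t - 1) * (PA powr (1 - real t) * W ^ t) = W ^ t"
    proof -
      have "PA ^ (t - 1) = PA powr real (t - 1)" using True by (simp add: powr_realpow)
      also have "\<dots> = PA powr (real t - 1)" using t by simp
      finally have "PA ^ (t - 1) * PA powr (1 - real t) = PA powr 0"
        by (simp add: powr_add[symmetric])
      thus ?thesis using True by (simp add: mult.assoc[symmetric])
    qed
    finally show ?thesis unfolding PA_def PB_def W_def .
  qed
qed

end

theorem corollary4p2: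
  fixes n t :: nat and G :: "real mat" and a b :: "nat \<Rightarrow> real"
  assumes "antiferromagnetic n G"
    and "t \<ge> 1"
    and "\<forall>i<n. a i \<ge> 0" and "\<forall>i<n. b i \<ge> 0"
  shows "volume_Kt t n G (\<lambda>u. if u = 0 then b else a) * volume_Kt t n G (\<lambda>u. if u = 0 then a else b)
         \<ge> volume_Kt t n G (\<lambda>u. a) * volume_Kt t n G (\<lambda>u. b)"
proof -
  let ?g = "\<lambda>i j. G $$ (i,j)"
  have hg: "hyp n ?g" and sym: "symm n ?g" using antiferro_hyp[OF assms(1)] by auto
  have gn: "gnn n ?g" using assms(1) unfolding antiferromagnetic_def weighted_graph_def gnn_def by auto
  note a0 = assms(3) and b0 = assms(4)
  let ?V1 = "Vol t n ?g (\<lambda>u. if u = 0 then b else a)"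
  let ?V2 = "Vol t n ?g (\<lambda>u. if u = 0 then a else b)"
  let ?PA = "Vol t n ?g (\<lambda>u. a)"
  let ?PB = "Vol t n ?g (\<lambda>u. b)"
  have "?PA * ?PB \<le> ?V1 * ?V2"
  proof (cases "t = 1")
    case True
    have "?V1 = ?PB" using True by (intro Vol_cong) auto
    moreover have "?V2 = ?PA" using True by (intro Vol_cong) auto
    ultimately show ?thesis by simp
  next
    case False
    hence t: "t \<ge> 2" using assms(2) by simp
    have V1: "?V1 = Vol t n ?g ((\<lambda>_. a)(t - 1 := b))"
    proof -
      have e: "(\<lambda>u. if u = 0 then b else a) = (\<lambda>_. a)(0 := b)" by auto
      show ?thesis by (subst e) (rule Vol_slot_swap_to[OF sym], use t in auto)
    qed
    have V2: "?V2 = Vol t n ?g ((\<lambda>_. b)(t - 1 := a))"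
    proof -
      have e: "(\<lambda>u. if u = 0 then a else b) = (\<lambda>_. b)(0 := a)" by auto
      show ?thesis by (subst e) (rule Vol_slot_swap_to[OF sym], use t in auto)
    qed
    have m1: "?PA ^ (t - 1) * ?PB \<le> ?V1 ^ t"
      unfolding V1 by (rule mink.minkowski) (unfold_locales, use t gn sym hg a0 b0 in auto)
    have m2: "?PB ^ (t - 1) * ?PA \<le> ?V2 ^ t"
      unfolding V2 by (rule mink.minkowski) (unfold_locales, use t gn sym hg a0 b0 in auto)
    have PA0: "?PA \<ge> 0" using gn a0 by (intro Vol_nonneg) (auto simp: xnn_def)
    have PB0: "?PB \<ge> 0" using gn b0 by (intro Vol_nonneg) (auto simp: xnn_def)
    have V10: "?V1 \<ge> 0" using gn a0 b0 by (intro Vol_nonneg) (auto simp: xnn_def)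
    have V20: "?V2 \<ge> 0" using gn a0 b0 by (intro Vol_nonneg) (auto simp: xnn_def)
    obtain r where r: "t = Suc r" using t by (cases t) auto
    define PA where "PA = ?PA"
    define PB where "PB = ?PB"
    define V1 where "V1 = ?V1"
    define V2 where "V2 = ?V2"
    have m1': "PA ^ r * PB \<le> V1 ^ Suc r" using m1 unfolding PA_def PB_def V1_def r by simp
    have m2': "PB ^ r * PA \<le> V2 ^ Suc r" using m2 unfolding PA_def PB_def V2_def r by simp
    have pr: "(PA ^ r * PB) * (PB ^ r * PA) \<le> V1 ^ Suc r * V2 ^ Suc r"
      using m1' m2' PA0 PB0 V10 unfolding PA_def PB_def V1_def by (intro mult_mono) auto
    have e1: "(PA ^ r * PB) * (PB ^ r * PA) = (PA * PB) ^ Suc r"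
      by (simp add: power_mult_distrib algebra_simps)
    have e2: "V1 ^ Suc r * V2 ^ Suc r = (V1 * V2) ^ Suc r" by (simp add: power_mult_distrib)
    have "(PA * PB) ^ Suc r \<le> (V1 * V2) ^ Suc r" using pr unfolding e1 e2 .
    hence "PA * PB \<le> V1 * V2" by (rule power_le_imp_le_base) (use V10 V20 in \<open>simp add: V1_def V2_def\<close>)
    thus ?thesis unfolding PA_def PB_def V1_def V2_def .
  qed
  thus ?thesis unfolding volume_Kt_Vol .
qed

end
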